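(* Let $N$ be a natural number and $\beta\in\mathbb{R}\setminus\mathbb{Q}$. If $A$ is a Fourier-uniform subset of $[N]$ with $|A|=\alpha N$, then $$\frac{1}{N^2}\sum_{x,d\in\mathbb{Z}}1_A(x)1_A(x+d)1_A([x+\beta d])=\frac{\alpha^3}{N^2}\sum_{x,d\in\mathbb{Z}}1_{[N]}(x)1_{[N]}(x+d)1_{[N]}([x+\beta d])+o_\beta(1).$$
   Context: $[N]=\{1,\dots,N\}$; for $\theta\in\mathbb{R}$, $[\theta]=\lfloor\theta+\tfrac12\rfloor$ is the nearest integer; $e(\theta)=e^{2\pi i\theta}$. For $A\subseteq[N]$ with $|A|=\alpha N$, the balanced function is $f_A=1_A-\alpha1_{[N]}$. A (sequence of) set(s) $A=A_N\subseteq[N]$ is Fourier-uniform if $\sup_{\theta\in[0,1]}|N^{-1}\sum_{n\leqslant N}f_A(n)e(n\theta)|=o(1)$ as $N\to\infty$. The $o_\beta(1)$ term tends to $0$ as $N\to\infty$ at a rate that may depend on $\beta$ (and on the rate in the Fourier-uniformity hypothesis). *)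

theory Defs
  imports "HOL-Analysis.Analysis"
begin

definition nint :: "real \<Rightarrow> int" where
  "nint \<theta> = \<lfloor>\<theta> + 1/2\<rfloor>"

definition e :: "real \<Rightarrow> complex" where
  "e \<theta> = exp (2 * of_real pi * \<i> * of_real \<theta>)"

definition dens :: "int set \<Rightarrow> nat \<Rightarrow> real" where
  "dens S N = real (card S) / real N"

definition balanced :: "int set \<Rightarrow> nat \<Rightarrow> int \<Rightarrow> real" where
  "balanced S N n = indicator S n - dens S N * indicator {1..int N} n"

definition fourier_uniform :: "(nat \<Rightarrow> int set) \<Rightarrow> bool" where
  "fourier_uniform A \<longleftrightarrow>
     ((\<lambda>N. SUP \<theta>\<in>{0..1::real}.
         norm ((1 / of_nat N) * (\<Sum>n\<in>{1..int N}. of_real (balanced (A N) N n) * e (of_int n * \<theta>))))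
      \<longlonglongrightarrow> 0)"

definition trip :: "int set \<Rightarrow> real \<Rightarrow> real" where
  "trip S \<beta> = (\<Sum>\<^sub>\<infinity>(x,d)\<in>(UNIV :: (int \<times> int) set).
      indicator S x * indicator S (x + d) * indicator S (nint (of_int x + \<beta> * of_int d)))"

end

theory Submission
  imports Defs
begin


lemma e_add: "e (a + b) = e a * e b"
  unfolding e_def by (simp add: distrib_left exp_add)

lemma e_zero[simp]: "e 0 = 1" unfolding e_def by simp

lemma norm_e[simp]: "norm (e a) = 1"
  unfolding e_def by (simp add: norm_exp_eq_Re)

lemma cnj_e: "cnj (e a) = e (- a)"
  unfolding e_def by (simp add: exp_cnj)

lemma e_diff: "e (a - b) = e a * cnj (e b)"
  using e_add[of a "-b"] by (simp add: cnj_e)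

lemma e_int: "e (of_int n) = 1"
proof -
  have "e (of_int n) = exp ((2 * (of_int n :: complex) * pi) * \<i>)"
    unfolding e_def by (simp add: algebra_simps)
  also have "\<dots> = 1" using exp_integer_2pi[of "of_int n"] by simp
  finally show ?thesis .
qed

lemma e_nat_pow: "e (real j * u) = e u ^ j"
  unfolding e_def by (simp add: exp_of_nat_mult[symmetric] algebra_simps)

lemma e_mult_cnj: "e a * cnj (e a) = 1"
  using e_diff[of a a] by simp



definition G :: "nat \<Rightarrow> real \<Rightarrow> complex" where
  "G K u = (\<Sum>j<K. e (real j * u))"

definition Phi :: "nat \<Rightarrow> nat \<Rightarrow> real \<Rightarrow> real" where
  "Phi L P s = (cmod (G (L*P) (s / real L)))^2 / (real L * real (L*P))"

lemma Phi_nonneg: "Phi L P s \<ge> 0"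
  unfolding Phi_def by simp

lemma G_le: "cmod (G K u) \<le> K"
proof -
  have "cmod (G K u) \<le> (\<Sum>j<K. cmod (e (real j * u)))"
    unfolding G_def by (rule norm_sum)
  also have "\<dots> = K" by simp
  finally show ?thesis .
qed

lemma Phi_le_P: assumes "L > 0" "P > 0" shows "Phi L P s \<le> P"
proof -
  have "(cmod (G (L*P) (s / real L)))^2 \<le> (real (L*P))^2"
    using G_le[of "L*P" "s / real L"] by (intro power_mono) auto
  hence "Phi L P s \<le> (real (L*P))^2 / (real L * real (L*P))"
    unfolding Phi_def using assms by (intro divide_right_mono) auto
  also have "\<dots> = P" using assms by (simp add: power2_eq_square field_simps)
  finally show ?thesis .
qed

lemma sin_ge_lin: assumes "0 \<le> x" "x \<le> pi/2" shows "sin x \<ge> 5/12 * x"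
proof -
  have mac: "sin y \<ge> y - y^3/6" if "y \<ge> 0" for y :: real
  proof -
    have b: "\<bar>sin y - (\<Sum>m<3. sin_coeff m * y ^ m)\<bar> \<le> inverse (fact 3) * \<bar>y\<bar> ^ 3"
      by (rule Maclaurin_sin_bound)
    have s3: "(\<Sum>m<3. sin_coeff m * y ^ m) = y"
      by (simp add: numeral_3_eq_3 sin_coeff_def lessThan_Suc)
    have f3: "inverse (fact 3 :: real) = 1/6" by (simp add: fact_numeral)
    from b have "\<bar>sin y - y\<bar> \<le> 1/6 * y ^ 3" unfolding s3 f3 using that by simp
    moreover have "y - sin y \<le> \<bar>sin y - y\<bar>" by linarith
    ultimately show ?thesis by linarith
  qed
  show ?thesis
  proof (cases "x \<le> 1")
    case True
    have "x*x \<le> 1" using True assms(1) by (simp add: mult_le_one)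
    hence "x * (x * x) \<le> x * 1" using assms(1) by (intro mult_left_mono) auto
    hence "x^3 \<le> x" by (simp add: power3_eq_cube mult.assoc)
    hence "x^3/6 \<le> x/6" by simp
    then show ?thesis using mac[OF assms(1)] assms(1) by linarith
  next
    case False
    have "sin 1 \<le> sin x"
      using False assms pi_ge_two by (subst sin_mono_le_eq) auto
    moreover have "sin (1::real) \<ge> 5/6" using mac[of 1] by simp
    moreover have "x \<le> 2" using assms pi_less_4 by linarith
    ultimately show ?thesis by linarith
  qed
qed

lemma abs_sin_ge: assumes "\<bar>u\<bar> \<le> 1/2" shows "\<bar>sin (pi * u)\<bar> \<ge> \<bar>u\<bar> / 2"
proof -
  have "sin (pi * \<bar>u\<bar>) \<ge> 5/12 * (pi * \<bar>u\<bar>)"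
    using assms by (intro sin_ge_lin) (auto simp: mult_left_le)
  moreover have "5/12 * (pi * \<bar>u\<bar>) \<ge> \<bar>u\<bar> / 2"
    using pi_ge_two mult_right_mono[of 2 pi "\<bar>u\<bar>"] by simp
  moreover have "\<bar>sin (pi * u)\<bar> = sin (pi * \<bar>u\<bar>)"
  proof (cases "u \<ge> 0")
    case True
    have "sin (pi * u) \<ge> 0" using True assms by (auto intro!: sin_ge_zero simp: mult_left_le)
    then show ?thesis using True by simp
  next
    case False
    then have "sin (pi * u) = - sin (pi * \<bar>u\<bar>)" by simp
    moreover have "sin (pi * \<bar>u\<bar>) \<ge> 0" using assms by (auto intro!: sin_ge_zero simp: mult_left_le)
    ultimately show ?thesis by simp
  qed
  ultimately show ?thesis by linarith
qed

lemma norm_one_minus_e: "cmod (1 - e u) = 2 * \<bar>sin (pi * u)\<bar>"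
proof -
  have eu: "e u = cis (2 * pi * u)" unfolding e_def by (simp add: cis_conv_exp mult.commute mult.left_commute)
  have "(cmod (1 - e u))^2 = (1 - cos (2*pi*u))^2 + (sin (2*pi*u))^2"
    unfolding eu by (simp add: cmod_power2)
  also have "\<dots> = 2 - 2 * cos (2*pi*u)"
    using sin_cos_squared_add[of "2*pi*u"] by (simp add: power2_eq_square algebra_simps)
  also have "\<dots> = 4 * (sin (pi*u))^2"
    using cos_double_sin[of "pi*u"] by (simp add: algebra_simps)
  also have "\<dots> = (2 * \<bar>sin (pi * u)\<bar>)^2" by (simp add: power2_eq_square)
  finally show ?thesis
    by (metis abs_of_nonneg norm_ge_zero power2_eq_imp_eq zero_le_mult_iff abs_ge_zero zero_le_numeral)
qed

lemma G_bound: assumes "0 < \<bar>u\<bar>" "\<bar>u\<bar> \<le> 1/2" shows "cmod (G K u) \<le> 2 / \<bar>u\<bar>"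
proof -
  let ?z = "e u"
  have nz: "cmod (1 - ?z) \<ge> \<bar>u\<bar>"
    using norm_one_minus_e[of u] abs_sin_ge[OF assms(2)] by linarith
  hence z1: "?z \<noteq> 1" using assms by auto
  have "G K u = (\<Sum>j<K. ?z ^ j)" unfolding G_def by (simp add: e_nat_pow)
  also have "\<dots> = (1 - ?z^K) / (1 - ?z)" using z1 by (simp add: sum_gp_strict)
  finally have "cmod (G K u) = cmod (1 - ?z^K) / cmod (1 - ?z)" by (simp add: norm_divide)
  also have "\<dots> \<le> 2 / cmod (1 - ?z)"
  proof (intro divide_right_mono)
    have "cmod (1 - ?z^K) \<le> cmod 1 + cmod (?z^K)" by (rule norm_triangle_ineq4)
    also have "\<dots> = 2" by (simp add: norm_power)
    finally show "cmod (1 - ?z^K) \<le> 2" .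
  qed simp
  also have "\<dots> \<le> 2 / \<bar>u\<bar>" using nz assms by (intro divide_left_mono) (auto intro!: mult_pos_pos)
  finally show ?thesis .
qed

lemma Phi_decay:
  assumes "L > 0" "P > 0" "0 < \<bar>s\<bar>" "\<bar>s\<bar> \<le> real L / 2"
  shows "Phi L P s \<le> 4 / (real P * s^2)"
proof -
  have u1: "0 < \<bar>s / real L\<bar>" "\<bar>s / real L\<bar> \<le> 1/2" using assms by (auto simp: field_simps)
  have "cmod (G (L*P) (s / real L)) \<le> 2 / \<bar>s / real L\<bar>" by (rule G_bound[OF u1])
  also have "\<dots> = 2 * real L / \<bar>s\<bar>" using assms by (simp add: field_simps)
  finally have g: "cmod (G (L*P) (s / real L)) \<le> 2 * real L / \<bar>s\<bar>" .
  have "(cmod (G (L*P) (s / real L)))^2 \<le> (2 * real L / \<bar>s\<bar>)^2"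
    using g by (intro power_mono) auto
  hence "Phi L P s \<le> (2 * real L / \<bar>s\<bar>)^2 / (real L * real (L*P))"
    unfolding Phi_def using assms by (intro divide_right_mono) auto
  also have "\<dots> = 4 / (real P * s^2)" using assms by (simp add: power2_eq_square field_simps)
  finally show ?thesis .
qed



lemma e_eq_1_imp_int: assumes "e u = 1" shows "\<exists>i::int. u = of_int i"
proof -
  have "sin (pi * u) = 0" using norm_one_minus_e[of u] assms by simp
  then obtain i :: int where "pi * u = of_int i * pi" using sin_zero_iff_int2 by blast
  then show ?thesis by auto
qed

lemma root_sum:
  fixes m :: int and K :: nat
  assumes "m \<noteq> 0" "\<bar>m\<bar> < int K"
  shows "(\<Sum>i<K. e (of_int m * real i / real K)) = 0"
proof -
  let ?w = "e (of_int m / real K)"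
  have K0: "K > 0" using assms by auto
  have w1: "?w \<noteq> 1"
  proof
    assume "?w = 1"
    then obtain i :: int where i: "of_int m / real K = of_int i" using e_eq_1_imp_int by blast
    hence "of_int m = of_int i * real K" using K0 by (simp add: field_simps)
    hence mi: "m = i * int K" by (metis of_int_eq_iff of_int_mult of_int_of_nat_eq)
    have "i \<noteq> 0" using mi assms by auto
    hence "\<bar>i\<bar> \<ge> 1" by auto
    hence "\<bar>i\<bar> * int K \<ge> 1 * int K" by (intro mult_right_mono) auto
    hence "\<bar>m\<bar> \<ge> int K" unfolding mi abs_mult by simp
    thus False using assms by simp
  qed
  have wK: "?w ^ K = 1"
  proof -
    have "?w ^ K = e (real K * (of_int m / real K))" by (rule e_nat_pow[symmetric])
    also have "\<dots> = e (of_int m)" using K0 by simp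
    finally show ?thesis by (simp add: e_int)
  qed
  have "(\<Sum>i<K. e (of_int m * real i / real K)) = (\<Sum>i<K. ?w ^ i)"
    by (intro sum.cong refl) (simp add: e_nat_pow[symmetric] mult.commute)
  also have "\<dots> = 0" using w1 wK by (simp add: sum_gp_strict)
  finally show ?thesis .
qed

lemma root_sum2:
  assumes "j < K" "j' < K"
  shows "(\<Sum>i<K. e ((real j' - real j) * real i / real K)) = (if j = j' then of_nat K else 0)"
proof (cases "j = j'")
  case True then show ?thesis by simp
next
  case False
  have "(\<Sum>i<K. e ((real j' - real j) * real i / real K)) = (\<Sum>i<K. e (of_int (int j' - int j) * real i / real K))"
    by simp
  also have "\<dots> = 0" using assms False by (intro root_sum) auto
  finally show ?thesis using False by simp
qed

lemma Phi_expand: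
  assumes "L > 0" "P > 0"
  shows "complex_of_real (Phi L P s) =
    (1 / (real L * real (L*P))) * (\<Sum>j<L*P. \<Sum>j'<L*P. e ((real j - real j') * (s / real L)))"
proof -
  let ?K = "L*P" and ?u = "s / real L"
  have "complex_of_real ((cmod (G ?K ?u))^2) = G ?K ?u * cnj (G ?K ?u)" by (rule complex_norm_square)
  also have "\<dots> = (\<Sum>j<?K. e (real j * ?u)) * (\<Sum>j'<?K. e (- (real j' * ?u)))"
    unfolding G_def by (simp add: cnj_e)
  also have "\<dots> = (\<Sum>j<?K. \<Sum>j'<?K. e (real j * ?u) * e (- (real j' * ?u)))"
    by (simp add: sum_product)
  also have "\<dots> = (\<Sum>j<?K. \<Sum>j'<?K. e ((real j - real j') * ?u))"
    by (intro sum.cong refl) (simp add: e_add[symmetric] algebra_simps)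
  finally have *: "complex_of_real ((cmod (G ?K ?u))^2) = (\<Sum>j<?K. \<Sum>j'<?K. e ((real j - real j') * ?u))" .
  show ?thesis unfolding Phi_def using * by (simp add: divide_inverse mult.commute)
qed

lemma partition_unity:
  assumes "L > 0" "P > 0"
  shows "(1 / real P) * (\<Sum>i<L*P. Phi L P (s - (of_int a + real i) / real P)) = 1"
proof -
  define K where "K = L*P"
  have K0: "K > 0" using assms by (simp add: K_def)
  have rK: "real K = real L * real P" by (simp add: K_def)
  define A where "A j j' = e ((real j - real j') * (s / real L) - (real j - real j') * of_int a / real K)" for j j' :: nat
  have split: "e ((real j - real j') * ((s - (of_int a + real i) / real P) / real L))
      = A j j' * e ((real j' - real j) * real i / real K)" for i j j' :: nat
  proof -
    have "(real j - real j') * ((s - (of_int a + real i) / real P) / real L)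
       = ((real j - real j') * (s / real L) - (real j - real j') * of_int a / real K) + (real j' - real j) * real i / real K"
      using assms unfolding rK by (simp add: field_simps)
    then show ?thesis unfolding A_def by (simp add: e_add)
  qed
  have "complex_of_real (\<Sum>i<K. Phi L P (s - (of_int a + real i) / real P))
      = (\<Sum>i<K. (1 / (real L * real K)) * (\<Sum>j<K. \<Sum>j'<K. e ((real j - real j') * ((s - (of_int a + real i) / real P) / real L))))"
    unfolding K_def of_real_sum using Phi_expand[OF assms] by simp
  also have "\<dots> = (\<Sum>i<K. (1 / (real L * real K)) * (\<Sum>j<K. \<Sum>j'<K. A j j' * e ((real j' - real j) * real i / real K)))"
    by (intro sum.cong refl) (simp only: split)
  also have "\<dots> = (1 / (real L * real K)) * (\<Sum>i<K. \<Sum>j<K. \<Sum>j'<K. A j j' * e ((real j' - real j) * real i / real K))"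
    by (simp only: sum_distrib_left)
  also have "(\<Sum>i<K. \<Sum>j<K. \<Sum>j'<K. A j j' * e ((real j' - real j) * real i / real K))
       = (\<Sum>j<K. \<Sum>j'<K. \<Sum>i<K. A j j' * e ((real j' - real j) * real i / real K))"
    by (rule trans[OF sum.swap]) (rule sum.cong[OF refl], rule sum.swap)
  also have "\<dots> = (\<Sum>j<K. \<Sum>j'<K. A j j' * (if j = j' then of_nat K else 0))"
    by (intro sum.cong refl) (simp add: sum_distrib_left[symmetric] root_sum2)
  also have "\<dots> = (\<Sum>j<K. A j j * of_nat K)"
    by (intro sum.cong refl) (simp add: if_distrib cong: if_cong)
  also have "\<dots> = of_nat K * of_nat K" by (simp add: A_def)
  finally have "complex_of_real (\<Sum>i<K. Phi L P (s - (of_int a + real i) / real P))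
      = complex_of_real (real P)"
    using assms K0 unfolding rK by (simp add: field_simps K_def)
  hence "(\<Sum>i<K. Phi L P (s - (of_int a + real i) / real P)) = real P"
    using of_real_eq_iff by blast
  then show ?thesis using assms by (simp add: K_def)
qed



lemma inv_sq_tele:
  fixes \<rho> q u :: real
  assumes "\<rho> > 0" "q > 0" "u \<ge> \<rho>"
  shows "1 / u^2 \<le> ((1 + q/\<rho>)/q) * (1/u - 1/(u+q))"
proof -
  have u0: "u > 0" using assms by linarith
  have "1/u - 1/(u+q) = q / (u*(u+q))" using u0 assms by (simp add: field_simps)
  hence r: "((1 + q/\<rho>)/q) * (1/u - 1/(u+q)) = (1 + q/\<rho>) / (u*(u+q))" using assms by simp
  have "u/\<rho> \<ge> 1" using assms by simp
  hence "q * 1 \<le> q * (u/\<rho>)" using assms by (intro mult_left_mono) auto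
  hence "q * u \<le> (q * (u/\<rho>)) * u" using u0 by (intro mult_right_mono) auto
  moreover have "(1 + q/\<rho>) * u^2 = u*u + (q * (u/\<rho>)) * u" by (simp add: power2_eq_square algebra_simps)
  ultimately have "u*(u+q) \<le> (1 + q/\<rho>) * u^2" by (simp add: algebra_simps)
  moreover have c0: "1 + q/\<rho> > 0" using assms by (simp add: add_pos_nonneg)
  ultimately have "(1 + q/\<rho>) / ((1 + q/\<rho>) * u^2) \<le> (1 + q/\<rho>) / (u*(u+q))"
    using u0 assms by (intro frac_le) auto
  hence "1 / u^2 \<le> (1 + q/\<rho>) / (u*(u+q))" using c0 by simp
  thus ?thesis using r by simp
qed

lemma GL_pos:
  fixes J :: "int set" and q \<rho> r :: real
  assumes "finite J" "q > 0" "\<rho> > 0" "\<And>j. j \<in> J \<Longrightarrow> r - of_int j * q \<ge> \<rho>"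
  shows "(\<Sum>j\<in>J. 1 / (r - of_int j * q)^2) \<le> (1 + q/\<rho>)/(q*\<rho>)"
proof (cases "J = {}")
  case True
  have "q/\<rho> \<ge> 0" using assms by simp
  then show ?thesis using True assms by simp
next
  case False
  define m where "m = Max J"
  define lo where "lo = Min J"
  define u0 where "u0 = r - of_int m * q"
  have mJ: "m \<in> J" using False assms by (simp add: m_def)
  have u0r: "u0 \<ge> \<rho>" using assms(4)[OF mJ] by (simp add: u0_def)
  have jm: "j \<le> m" if "j \<in> J" for j using that assms by (simp add: m_def)
  have jlo: "lo \<le> j" if "j \<in> J" for j using that assms by (simp add: lo_def)
  define g where "g i = 1 / (u0 + real i * q)^2" for i :: nat
  define n where "n = Suc (nat (m - lo))"
  have eq: "1 / (r - of_int j * q)^2 = g (nat (m - j))" if "j \<in> J" for j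
  proof -
    have "r - of_int j * q = u0 + real (nat (m - j)) * q"
      using jm[OF that] by (simp add: u0_def algebra_simps)
    thus ?thesis by (simp add: g_def)
  qed
  have inj: "inj_on (\<lambda>j. nat (m - j)) J"
  proof (rule inj_onI)
    fix x y assume xy: "x \<in> J" "y \<in> J" "nat (m - x) = nat (m - y)"
    hence "int (nat (m - x)) = int (nat (m - y))" by simp
    thus "x = y" using jm[OF xy(1)] jm[OF xy(2)] by simp
  qed
  have "(\<Sum>j\<in>J. 1 / (r - of_int j * q)^2) = (\<Sum>j\<in>J. g (nat (m - j)))"
    by (rule sum.cong) (auto simp: eq)
  also have "\<dots> = (\<Sum>i\<in>(\<lambda>j. nat (m - j)) ` J. g i)"
    by (simp add: sum.reindex[OF inj] comp_def)
  also have "\<dots> \<le> (\<Sum>i<n. g i)"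
  proof (rule sum_mono2)
    show "(\<lambda>j. nat (m - j)) ` J \<subseteq> {..<n}"
      using jm jlo by (force simp: n_def)
  qed (auto simp: g_def)
  also have "\<dots> \<le> (\<Sum>i<n. ((1 + q/\<rho>)/q) * (1/(u0 + real i * q) - 1/(u0 + real (Suc i) * q)))"
  proof (rule sum_mono)
    fix i assume "i \<in> {..<n}"
    have "real i * q \<ge> 0" using assms by simp
    hence "u0 + real i * q \<ge> \<rho>" using u0r by linarith
    from inv_sq_tele[OF assms(3) assms(2) this]
    show "g i \<le> ((1 + q/\<rho>)/q) * (1/(u0 + real i * q) - 1/(u0 + real (Suc i) * q))"
      by (simp add: g_def algebra_simps)
  qed
  also have "\<dots> = ((1 + q/\<rho>)/q) * (\<Sum>i<n. (1/(u0 + real i * q) - 1/(u0 + real (Suc i) * q)))"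
    by (simp add: sum_distrib_left)
  also have "(\<Sum>i<n. (1/(u0 + real i * q) - 1/(u0 + real (Suc i) * q))) = 1/u0 - 1/(u0 + real n * q)"
    using sum_lessThan_telescope'[of "\<lambda>i. 1/(u0 + real i * q)" n] by simp
  also have "\<dots> \<le> 1/\<rho>"
  proof -
    have "1/(u0 + real n * q) \<ge> 0" using u0r assms by simp
    moreover have "1/u0 \<le> 1/\<rho>" using u0r assms by (simp add: frac_le)
    ultimately show ?thesis by linarith
  qed
  finally show ?thesis using assms by (simp add: mult_left_mono divide_simps mult.commute)
qed

lemma GL:
  fixes J :: "int set" and q \<rho> r :: real
  assumes "finite J" "q > 0" "\<rho> > 0" "\<And>j. j \<in> J \<Longrightarrow> \<bar>r - of_int j * q\<bar> \<ge> \<rho>"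
  shows "(\<Sum>j\<in>J. 1 / (r - of_int j * q)^2) \<le> 2 * ((1 + q/\<rho>)/(q*\<rho>))"
proof -
  define J1 where "J1 = {j\<in>J. r - of_int j * q > 0}"
  define J2 where "J2 = {j\<in>J. \<not> r - of_int j * q > 0}"
  have fin: "finite J1" "finite J2" using assms by (auto simp: J1_def J2_def)
  have "(\<Sum>j\<in>J. 1 / (r - of_int j * q)^2) = (\<Sum>j\<in>J1. 1 / (r - of_int j * q)^2) + (\<Sum>j\<in>J2. 1 / (r - of_int j * q)^2)"
  proof -
    have "J = J1 \<union> J2" "J1 \<inter> J2 = {}" unfolding J1_def J2_def by auto
    thus ?thesis using sum.union_disjoint[OF fin] by simp
  qed
  also have "(\<Sum>j\<in>J1. 1 / (r - of_int j * q)^2) \<le> (1 + q/\<rho>)/(q*\<rho>)"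
    by (rule GL_pos[OF fin(1) assms(2,3)]) (use assms(4) in \<open>fastforce simp: J1_def\<close>)
  also have "(\<Sum>j\<in>J2. 1 / (r - of_int j * q)^2) = (\<Sum>j\<in>uminus ` J2. 1 / ((-r) - of_int j * q)^2)"
    by (subst sum.reindex) (auto simp: inj_on_def power2_eq_square algebra_simps)
  also have "\<dots> \<le> (1 + q/\<rho>)/(q*\<rho>)"
    by (rule GL_pos) (use fin assms in \<open>fastforce simp: J2_def\<close>)+
  finally show ?thesis by (simp add: mult_ac)
qed

lemma TL:
  fixes J :: "int set" and \<rho> r :: real
  assumes "finite J" "L > 0" "P > 0" "\<rho> > 0" "1 / real P \<le> \<rho>"
    and "\<And>j. j \<in> J \<Longrightarrow> \<rho> \<le> \<bar>r - of_int j / real P\<bar> \<and> \<bar>r - of_int j / real P\<bar> \<le> real L / 2"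
  shows "(1 / real P) * (\<Sum>j\<in>J. Phi L P (r - of_int j / real P)) \<le> 16 / (real P * \<rho>)"
proof -
  have "(\<Sum>j\<in>J. Phi L P (r - of_int j / real P)) \<le> (\<Sum>j\<in>J. (4 / real P) * (1 / (r - of_int j * (1 / real P))^2))"
  proof (rule sum_mono)
    fix j assume jJ: "j \<in> J"
    have "0 < \<bar>r - of_int j / real P\<bar>" using assms(6)[OF jJ] assms(4) by linarith
    from Phi_decay[OF assms(2,3) this] assms(6)[OF jJ]
    show "Phi L P (r - of_int j / real P) \<le> (4 / real P) * (1 / (r - of_int j * (1 / real P))^2)"
      by simp
  qed
  also have "\<dots> = (4 / real P) * (\<Sum>j\<in>J. 1 / (r - of_int j * (1 / real P))^2)"
    by (simp add: sum_distrib_left)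
  also have "\<dots> \<le> (4 / real P) * (2 * ((1 + (1 / real P)/\<rho>)/((1 / real P)*\<rho>)))"
    by (intro mult_left_mono GL) (use assms in auto)
  also have "\<dots> = 8 * (1 + (1 / real P)/\<rho>) / \<rho>"
    using assms by (simp add: field_simps)
  also have "\<dots> \<le> 8 * 2 / \<rho>"
  proof -
    have "(1 / real P)/\<rho> \<le> 1" using assms by (simp add: field_simps)
    hence "1 + (1 / real P)/\<rho> \<le> 2" by linarith
    hence "8 * (1 + (1 / real P)/\<rho>) \<le> 8 * 2" by (rule mult_left_mono) simp
    thus ?thesis using assms by (intro divide_right_mono) auto
  qed
  finally have "(\<Sum>j\<in>J. Phi L P (r - of_int j / real P)) \<le> 16 / \<rho>" by simp
  hence "(1 / real P) * (\<Sum>j\<in>J. Phi L P (r - of_int j / real P)) \<le> (1 / real P) * (16 / \<rho>)"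
    using assms by (intro mult_left_mono) auto
  thus ?thesis by simp
qed



definition TT :: "nat \<Rightarrow> int set" where
  "TT P = {j. - int P \<le> 2*j \<and> 2*j < int P}"

definition psi :: "nat \<Rightarrow> nat \<Rightarrow> real \<Rightarrow> real" where
  "psi L P s = (1 / real P) * (\<Sum>j\<in>TT P. Phi L P (s - of_int j / real P))"

lemma TT_sub: "TT P \<subseteq> {- int P..int P}"
  unfolding TT_def by auto

lemma finite_TT[simp]: "finite (TT P)"
  using TT_sub finite_subset by blast

lemma card_TT: "card (TT P) \<le> 2 * P + 1"
proof -
  have "card (TT P) \<le> card {- int P..int P}" by (rule card_mono) (auto simp: TT_sub)
  also have "\<dots> = 2 * P + 1" by simp
  finally show ?thesis .
qed

lemma TT_mem: assumes "j \<in> TT P" "P > 0"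
  shows "-1/2 \<le> of_int j / real P" "of_int j / real P < 1/2"
proof -
  have "- int P \<le> 2*j" "2*j < int P" using assms(1) by (auto simp: TT_def)
  hence "- real P \<le> 2 * of_int j" "2 * of_int j < real P" by linarith+
  thus "-1/2 \<le> of_int j / real P" "of_int j / real P < 1/2" using assms(2) by (auto simp: field_simps)
qed

lemma psi_nonneg: "psi L P s \<ge> 0"
  unfolding psi_def by (intro mult_nonneg_nonneg sum_nonneg) (auto intro: Phi_nonneg)

lemma window:
  assumes "L > 0" "P > 0"
  shows "(1 / real P) * (\<Sum>i\<in>{a..<a + int (L*P)}. Phi L P (s - of_int i / real P)) = 1"
proof -
  have img: "(\<lambda>i. a + int i) ` {..<L*P} = {a..<a + int (L*P)}"
  proof
    show "{a..<a + int (L*P)} \<subseteq> (\<lambda>i. a + int i) ` {..<L*P}"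
    proof
      fix x assume "x \<in> {a..<a + int (L*P)}"
      hence x: "a \<le> x" "x - a < int (L*P)" by auto
      hence "x = a + int (nat (x - a))" "nat (x - a) < L*P" by (auto simp: nat_less_iff)
      thus "x \<in> (\<lambda>i. a + int i) ` {..<L*P}" by blast
    qed
  next
    show "(\<lambda>i. a + int i) ` {..<L*P} \<subseteq> {a..<a + int (L*P)}"
    proof
      fix x assume "x \<in> (\<lambda>i. a + int i) ` {..<L*P}"
      then obtain i where "i < L*P" "x = a + int i" by auto
      moreover have "int i < int (L*P)" using \<open>i < L*P\<close> by linarith
      ultimately show "x \<in> {a..<a + int (L*P)}" by auto
    qed
  qed
  have "(\<Sum>i\<in>{a..<a + int (L*P)}. Phi L P (s - of_int i / real P))
      = (\<Sum>i<L*P. Phi L P (s - (of_int a + real i) / real P))"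
    unfolding img[symmetric] by (subst sum.reindex) (auto simp: inj_on_def)
  thus ?thesis using partition_unity[OF assms, of s a] by simp
qed

lemma psi_le1:
  assumes "L \<ge> 3" "P > 0"
  shows "psi L P s \<le> 1"
proof -
  have L0: "L > 0" using assms by simp
  have sub: "TT P \<subseteq> {- int P..<- int P + int (L*P)}"
  proof -
    have h: "int L * int P \<ge> 3 * int P" using assms by (simp add: mult_right_mono)
    show ?thesis
    proof
      fix j assume "j \<in> TT P"
      hence j1: "- int P \<le> j" and j2: "j \<le> int P" using TT_sub[of P] by auto
      have p0: "int P > 0" using assms by simp
      have "j < - int P + int L * int P" using j1 j2 p0 h by linarith
      thus "j \<in> {- int P..<- int P + int (L*P)}" using j1 by simp
    qed
  qed
  have "psi L P s \<le> (1 / real P) * (\<Sum>i\<in>{- int P..<- int P + int (L*P)}. Phi L P (s - of_int i / real P))"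
    unfolding psi_def
    by (intro mult_left_mono sum_mono2 sub) (auto intro: Phi_nonneg)
  also have "\<dots> = 1" by (rule window[OF L0 assms(2)])
  finally show ?thesis .
qed

lemma abs_helper: "- a < (t::real) \<and> t \<le> a \<Longrightarrow> \<bar>t\<bar> \<le> a" by linarith

lemma far_helper:
  fixes x r \<delta> :: real
  shows "x < -1/2 \<or> x \<ge> 1/2 \<Longrightarrow> \<bar>r\<bar> \<le> 1/2 - \<delta> \<Longrightarrow> \<delta> \<le> \<bar>r - x\<bar>"
  by (auto simp: abs_if split: if_splits)

lemma psi_good:
  fixes r \<delta> :: real
  assumes "L \<ge> 3" "P > 0" "\<delta> > 0" "1 / real P \<le> \<delta>" "\<bar>r\<bar> \<le> 1/2 - \<delta>"
  shows "1 - psi L P r \<le> 16 / (real P * \<delta>)"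
proof -
  have L0: "L > 0" using assms by simp
  have P0: "real P > 0" using assms by simp
  define a where "a = \<lceil>(r - real L / 2) * real P\<rceil>"
  define W where "W = {a..<a + int (L*P)}"
  have aux1: "(r - real L / 2) * real P \<le> of_int a" unfolding a_def by simp
  have aux2: "of_int a < (r - real L / 2) * real P + 1" unfolding a_def by linarith
  have inW: "- (real L / 2) < r - of_int i / real P \<and> r - of_int i / real P \<le> real L / 2" if "i \<in> W" for i
  proof -
    have "a \<le> i" "i + 1 \<le> a + int (L*P)" using that by (auto simp: W_def)
    have "(r - real L / 2) * real P \<le> of_int i" using aux1 \<open>a \<le> i\<close> by (meson of_int_le_iff order_trans)
    moreover have "of_int (i + 1) \<le> (of_int (a + int (L*P)) :: real)" using \<open>i + 1 \<le> a + int (L*P)\<close> of_int_le_iff by blast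
    ultimately have "(r - real L / 2) * real P \<le> of_int i" "of_int i + 1 \<le> of_int a + real L * real P"
      by auto
    hence "(r - real L / 2) * real P \<le> of_int i" "of_int i < (r + real L / 2) * real P"
      using aux2 by (auto simp: algebra_simps)
    thus ?thesis using P0 by (auto simp: field_simps)
  qed
  have sub: "TT P \<subseteq> W"
  proof
    fix j assume jT: "j \<in> TT P"
    note m = TT_mem[OF jT assms(2)]
    have "(r - real L / 2) * real P \<le> of_int j"
    proof -
      have "r - real L / 2 \<le> of_int j / real P" using m assms by linarith
      thus ?thesis using P0 by (simp add: field_simps)
    qed
    hence "a \<le> j" unfolding a_def by (simp add: ceiling_le_iff)
    moreover have "of_int j < (r + real L / 2) * real P"
    proof -
      have "of_int j / real P < r + real L / 2" using m assms by linarith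
      thus ?thesis using P0 by (simp add: field_simps)
    qed
    hence "of_int j < of_int a + real L * real P" using aux1 by (simp add: algebra_simps)
    hence "of_int j < (of_int (a + int (L*P)) :: real)" by simp
    hence "j < a + int (L*P)" by (simp only: of_int_less_iff)
    ultimately show "j \<in> W" by (simp add: W_def)
  qed
  have fW: "finite W" by (simp add: W_def)
  have "1 = (1 / real P) * (\<Sum>i\<in>W. Phi L P (r - of_int i / real P))"
    unfolding W_def by (rule window[OF L0 assms(2), symmetric])
  also have "(\<Sum>i\<in>W. Phi L P (r - of_int i / real P))
      = (\<Sum>i\<in>TT P. Phi L P (r - of_int i / real P)) + (\<Sum>i\<in>W - TT P. Phi L P (r - of_int i / real P))"
    using sum.subset_diff[OF sub fW, of "\<lambda>i. Phi L P (r - of_int i / real P)"] by linarith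
  finally have eq: "1 - psi L P r = (1 / real P) * (\<Sum>i\<in>W - TT P. Phi L P (r - of_int i / real P))"
    unfolding psi_def by (simp add: algebra_simps)
  have "(1 / real P) * (\<Sum>i\<in>W - TT P. Phi L P (r - of_int i / real P)) \<le> 16 / (real P * \<delta>)"
  proof (rule TL)
    fix i assume i: "i \<in> W - TT P"
    have "\<not> (- int P \<le> 2*i \<and> 2*i < int P)" using i by (auto simp: TT_def)
    hence "2 * of_int i < - real P \<or> 2 * of_int i \<ge> real P" by linarith
    hence "of_int i / real P < -1/2 \<or> of_int i / real P \<ge> 1/2" using P0 by (auto simp: field_simps)
    hence "\<delta> \<le> \<bar>r - of_int i / real P\<bar>" using assms(5) far_helper by blast
    moreover have "\<bar>r - of_int i / real P\<bar> \<le> real L / 2" using abs_helper[OF inW[OF DiffD1[OF i]]] .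
    ultimately show "\<delta> \<le> \<bar>r - of_int i / real P\<bar> \<and> \<bar>r - of_int i / real P\<bar> \<le> real L / 2"
      by blast
  qed (use fW L0 assms in auto)
  thus ?thesis using eq by simp
qed

lemma psi_sum_far:
  fixes r \<rho> :: real and D :: "int set"
  assumes "finite D" "L > 0" "P > 0" "\<rho> > 0" "1 / real P \<le> \<rho>"
    and "\<And>n j. n \<in> D \<Longrightarrow> j \<in> TT P \<Longrightarrow> \<rho> \<le> \<bar>r + of_int n - of_int j / real P\<bar> \<and> \<bar>r + of_int n - of_int j / real P\<bar> \<le> real L / 2"
  shows "(\<Sum>n\<in>D. psi L P (r + of_int n)) \<le> 16 / (real P * \<rho>)"
proof -
  have P0: "real P > 0" using assms by simp
  define h where "h = (\<lambda>(n, j). j - n * int P)"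
  have key: "r + of_int n - of_int j / real P = r - of_int (h (n, j)) / real P" for n j
    using P0 by (simp add: h_def field_simps)
  have inj: "inj_on h (D \<times> TT P)"
  proof (rule inj_onI, clarify)
    fix n1 j1 n2 j2 assume A: "n1 \<in> D" "j1 \<in> TT P" "n2 \<in> D" "j2 \<in> TT P" "h (n1, j1) = h (n2, j2)"
    hence e: "j1 - j2 = (n1 - n2) * int P" by (simp add: h_def algebra_simps)
    have b: "\<bar>j1 - j2\<bar> < int P" using A(2,4) by (auto simp: TT_def)
    have "n1 = n2"
    proof (rule ccontr)
      assume "n1 \<noteq> n2"
      hence "\<bar>n1 - n2\<bar> \<ge> 1" by auto
      hence "\<bar>n1 - n2\<bar> * int P \<ge> 1 * int P" by (intro mult_right_mono) auto
      thus False using b e by (simp add: abs_mult)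
    qed
    thus "n1 = n2 \<and> j1 = j2" using e by simp
  qed
  have "(\<Sum>n\<in>D. psi L P (r + of_int n)) = (1 / real P) * (\<Sum>n\<in>D. \<Sum>j\<in>TT P. Phi L P (r + of_int n - of_int j / real P))"
    unfolding psi_def by (simp add: sum_distrib_left)
  also have "(\<Sum>n\<in>D. \<Sum>j\<in>TT P. Phi L P (r + of_int n - of_int j / real P))
      = (\<Sum>p\<in>D \<times> TT P. Phi L P (r - of_int (h p) / real P))"
    by (simp add: sum.cartesian_product key)
  also have "\<dots> = (\<Sum>i\<in>h ` (D \<times> TT P). Phi L P (r - of_int i / real P))"
    by (simp add: sum.reindex[OF inj] comp_def)
  finally have eq: "(\<Sum>n\<in>D. psi L P (r + of_int n)) = (1 / real P) * (\<Sum>i\<in>h ` (D \<times> TT P). Phi L P (r - of_int i / real P))" .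
  have "(1 / real P) * (\<Sum>i\<in>h ` (D \<times> TT P). Phi L P (r - of_int i / real P)) \<le> 16 / (real P * \<rho>)"
  proof (rule TL)
    fix i assume "i \<in> h ` (D \<times> TT P)"
    then obtain n j where "n \<in> D" "j \<in> TT P" "i = h (n, j)" by auto
    thus "\<rho> \<le> \<bar>r - of_int i / real P\<bar> \<and> \<bar>r - of_int i / real P\<bar> \<le> real L / 2"
      using assms(6)[of n j] key[of n j] by simp
  qed (use assms in auto)
  thus ?thesis using eq by simp
qed



definition chi :: "real \<Rightarrow> real" where
  "chi s = (if -1/2 \<le> s \<and> s < 1/2 then 1 else 0)"

lemma nint_add_int: "nint (of_int x + t) = x + nint t"
proof -
  have "\<lfloor>of_int x + t + 1/2\<rfloor> = \<lfloor>(t + 1/2) + of_int x\<rfloor>" by (simp add: ac_simps)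
  also have "\<dots> = \<lfloor>t + 1/2\<rfloor> + x" by (rule floor_add_int[symmetric])
  finally show ?thesis unfolding nint_def by simp
qed

lemma nint_bounds: "-1/2 \<le> t - of_int (nint t)" "t - of_int (nint t) < 1/2"
proof -
  have A: "of_int \<lfloor>t + 1/2\<rfloor> \<le> t + 1/2" by (rule of_int_floor_le)
  have B: "t + 1/2 < of_int \<lfloor>t + 1/2\<rfloor> + 1" by (rule real_of_int_floor_add_one_gt)
  show "-1/2 \<le> t - of_int (nint t)" "t - of_int (nint t) < 1/2" unfolding nint_def using A B by linarith+
qed

lemma chi_nint: "chi (t - of_int z) = (if z = nint t then 1 else 0)"
proof -
  have "(-1/2 \<le> t - of_int z \<and> t - of_int z < 1/2) \<longleftrightarrow> (of_int z \<le> t + 1/2 \<and> t + 1/2 < of_int z + 1)"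
    by linarith
  also have "\<dots> \<longleftrightarrow> \<lfloor>t + 1/2\<rfloor> = z" by (simp only: floor_eq_iff)
  finally have "(-1/2 \<le> t - of_int z \<and> t - of_int z < 1/2) \<longleftrightarrow> z = nint t"
    unfolding nint_def by auto
  thus ?thesis unfolding chi_def by simp
qed

lemma TT_abs: "j \<in> TT P \<Longrightarrow> P > 0 \<Longrightarrow> \<bar>of_int j / real P\<bar> \<le> 1/2"
proof -
  assume a: "j \<in> TT P" "P > 0"
  have "-1/2 \<le> of_int j / real P" "of_int j / real P < 1/2" using TT_mem[OF a] by auto
  thus ?thesis by (simp only: abs_le_iff) linarith
qed

lemma Zsum:
  fixes t :: real and N :: nat
  assumes L3: "L \<ge> 3" and P0: "P > 0"
    and LB: "\<bar>of_int (nint t)\<bar> + real N + 1 \<le> real L / 2"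
  shows "(\<Sum>z\<in>{1..int N}. \<bar>chi (t - of_int z) - psi L P (t - of_int z)\<bar>) \<le> 20"
    and "\<delta> > 0 \<Longrightarrow> 1 / real P \<le> \<delta> \<Longrightarrow> \<bar>t - of_int (nint t)\<bar> \<le> 1/2 - \<delta> \<Longrightarrow>
      (\<Sum>z\<in>{1..int N}. \<bar>chi (t - of_int z) - psi L P (t - of_int z)\<bar>) \<le> 32 / (real P * \<delta>)"
proof -
  define n0 where "n0 = nint t"
  define r where "r = t - of_int n0"
  define B where "B = {1..int N}"
  have L0: "L > 0" using L3 by simp
  have tz: "t - of_int z = r + of_int (n0 - z)" for z by (simp add: r_def)
  have rb: "\<bar>r\<bar> \<le> 1/2" using nint_bounds[of t] unfolding r_def n0_def by (simp only: abs_le_iff) linarith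
  have nB: "\<bar>of_int (n0 - z)\<bar> \<le> \<bar>of_int n0\<bar> + real N" if "z \<in> B" for z
    using that by (auto simp: B_def)
  have far: "\<bar>r + of_int n - of_int j / real P\<bar> \<le> real L / 2"
    if "j \<in> TT P" "\<bar>of_int n\<bar> \<le> \<bar>of_int n0\<bar> + real N" for n j
  proof -
    have "\<bar>r + of_int n - of_int j / real P\<bar> \<le> \<bar>r\<bar> + \<bar>of_int n\<bar> + \<bar>of_int j / real P\<bar>" by linarith
    moreover have "\<bar>of_int n0\<bar> + real N + 1 \<le> real L / 2" using LB by (simp add: n0_def)
    ultimately show ?thesis using TT_abs[OF that(1) P0] rb that(2) by linarith
  qed
  have fB: "finite B" by (simp add: B_def)
  have injB: "inj_on (\<lambda>z. n0 - z) X" for X by (auto simp: inj_on_def)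
  have sumpsi: "(\<Sum>z\<in>X. psi L P (t - of_int z)) = (\<Sum>n\<in>(\<lambda>z. n0 - z) ` X. psi L P (r + of_int n))" for X
    by (simp add: sum.reindex[OF injB] tz comp_def)
  have chisum: "(\<Sum>z\<in>B. chi (t - of_int z)) \<le> 1"
  proof -
    have "(\<Sum>z\<in>B. chi (t - of_int z)) = (\<Sum>z\<in>B. if z = n0 then 1 else 0)"
      by (simp add: chi_nint n0_def)
    also have "\<dots> \<le> 1" using fB by (simp add: sum.delta)
    finally show ?thesis .
  qed
  define D0 where "D0 = (\<lambda>z. n0 - z) ` B"
  have fD0: "finite D0" using fB by (simp add: D0_def)
  define D1 where "D1 = {n\<in>D0. \<bar>n\<bar> \<le> 1}"
  define D2 where "D2 = {n\<in>D0. \<not> \<bar>n\<bar> \<le> 1}"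
  have fD: "finite D1" "finite D2" using fD0 by (auto simp: D1_def D2_def)
  have "(\<Sum>n\<in>D0. psi L P (r + of_int n)) = (\<Sum>n\<in>D1. psi L P (r + of_int n)) + (\<Sum>n\<in>D2. psi L P (r + of_int n))"
  proof -
    have "D0 = D1 \<union> D2" "D1 \<inter> D2 = {}" by (auto simp: D1_def D2_def)
    thus ?thesis using sum.union_disjoint[OF fD] by simp
  qed
  also have "(\<Sum>n\<in>D1. psi L P (r + of_int n)) \<le> (\<Sum>n\<in>D1. 1)"
    by (intro sum_mono psi_le1 L3 P0)
  also have "\<dots> \<le> 3"
  proof -
    have "D1 \<subseteq> {-1..1}" by (auto simp: D1_def)
    hence "card D1 \<le> card {-1..(1::int)}" by (intro card_mono) auto
    thus ?thesis by simp
  qed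
  also have "(\<Sum>n\<in>D2. psi L P (r + of_int n)) \<le> 16 / (real P * 1)"
  proof (rule psi_sum_far[OF fD(2) L0 P0])
    fix n j assume n: "n \<in> D2" and j: "j \<in> TT P"
    have n2: "\<bar>n\<bar> \<ge> 2" using n by (auto simp: D2_def)
    have "\<bar>of_int n\<bar> \<ge> (2::real)" using n2 by linarith
    moreover have "\<bar>r + of_int n - of_int j / real P\<bar> \<ge> \<bar>of_int n\<bar> - \<bar>r\<bar> - \<bar>of_int j / real P\<bar>" by linarith
    ultimately have "1 \<le> \<bar>r + of_int n - of_int j / real P\<bar>" using rb TT_abs[OF j P0] by linarith
    moreover have "n \<in> D0" using n by (simp add: D2_def)
    then obtain z where "z \<in> B" "n = n0 - z" by (auto simp: D0_def)
    hence "\<bar>of_int n\<bar> \<le> \<bar>of_int n0\<bar> + real N" using nB by simp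
    ultimately show "1 \<le> \<bar>r + of_int n - of_int j / real P\<bar> \<and> \<bar>r + of_int n - of_int j / real P\<bar> \<le> real L / 2"
      using far[OF j] by simp
  qed (use P0 in auto)
  finally have psum: "(\<Sum>n\<in>D0. psi L P (r + of_int n)) \<le> 3 + 16 / real P" by simp
  have "(\<Sum>z\<in>B. \<bar>chi (t - of_int z) - psi L P (t - of_int z)\<bar>) \<le> (\<Sum>z\<in>B. chi (t - of_int z) + psi L P (t - of_int z))"
    by (intro sum_mono) (auto simp: chi_def psi_nonneg abs_le_iff intro: order_trans[OF _ psi_nonneg])
  also have "\<dots> = (\<Sum>z\<in>B. chi (t - of_int z)) + (\<Sum>n\<in>D0. psi L P (r + of_int n))"
    by (simp add: sum.distrib sumpsi D0_def)
  also have "\<dots> \<le> 1 + (3 + 16 / real P)" using chisum psum by linarith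
  also have "\<dots> \<le> 20"
  proof -
    have "16 / real P \<le> 16" using P0 by (simp add: divide_le_eq)
    thus ?thesis by simp
  qed
  finally show "(\<Sum>z\<in>{1..int N}. \<bar>chi (t - of_int z) - psi L P (t - of_int z)\<bar>) \<le> 20"
    by (simp add: B_def)
  assume d0: "\<delta> > 0" and dP: "1 / real P \<le> \<delta>" and rg: "\<bar>t - of_int (nint t)\<bar> \<le> 1/2 - \<delta>"
  have rg': "\<bar>r\<bar> \<le> 1/2 - \<delta>" using rg by (simp add: r_def n0_def)
  define B' where "B' = B - {n0}"
  have fB': "finite B'" using fB by (simp add: B'_def)
  have "(\<Sum>z\<in>B. \<bar>chi (t - of_int z) - psi L P (t - of_int z)\<bar>)
     \<le> (1 - psi L P r) + (\<Sum>z\<in>B'. psi L P (t - of_int z))"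
  proof (cases "n0 \<in> B")
    case True
    have "(\<Sum>z\<in>B. \<bar>chi (t - of_int z) - psi L P (t - of_int z)\<bar>)
        = \<bar>chi (t - of_int n0) - psi L P (t - of_int n0)\<bar> + (\<Sum>z\<in>B'. \<bar>chi (t - of_int z) - psi L P (t - of_int z)\<bar>)"
      unfolding B'_def using True fB by (simp add: sum.remove)
    also have "\<bar>chi (t - of_int n0) - psi L P (t - of_int n0)\<bar> = 1 - psi L P r"
      using psi_le1[OF L3 P0, of r] by (simp add: chi_nint n0_def r_def)
    also have "(\<Sum>z\<in>B'. \<bar>chi (t - of_int z) - psi L P (t - of_int z)\<bar>) = (\<Sum>z\<in>B'. psi L P (t - of_int z))"
      by (intro sum.cong refl) (auto simp: B'_def chi_nint n0_def psi_nonneg)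
    finally show ?thesis by simp
  next
    case False
    hence "B' = B" by (simp add: B'_def)
    moreover have "(\<Sum>z\<in>B. \<bar>chi (t - of_int z) - psi L P (t - of_int z)\<bar>) = (\<Sum>z\<in>B. psi L P (t - of_int z))"
      using False by (intro sum.cong refl) (auto simp: chi_nint n0_def psi_nonneg)
    moreover have "1 - psi L P r \<ge> 0" using psi_le1[OF L3 P0, of r] by simp
    ultimately show ?thesis by simp
  qed
  also have "(\<Sum>z\<in>B'. psi L P (t - of_int z)) = (\<Sum>n\<in>(\<lambda>z. n0 - z) ` B'. psi L P (r + of_int n))"
    by (rule sumpsi)
  also have "\<dots> \<le> 16 / (real P * \<delta>)"
  proof (rule psi_sum_far[OF _ L0 P0 d0 dP])
    show "finite ((\<lambda>z. n0 - z) ` B')" using fB' by simp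
    fix n j assume n: "n \<in> (\<lambda>z. n0 - z) ` B'" and j: "j \<in> TT P"
    then obtain z where z: "z \<in> B'" "n = n0 - z" by auto
    have "n \<noteq> 0" using z by (auto simp: B'_def)
    hence "\<bar>of_int n\<bar> \<ge> (1::real)" by linarith
    moreover have "\<bar>r + of_int n - of_int j / real P\<bar> \<ge> \<bar>of_int n\<bar> - \<bar>r\<bar> - \<bar>of_int j / real P\<bar>" by linarith
    ultimately have "\<delta> \<le> \<bar>r + of_int n - of_int j / real P\<bar>" using rg' TT_abs[OF j P0] by linarith
    moreover have "\<bar>of_int n\<bar> \<le> \<bar>of_int n0\<bar> + real N" using nB z by (auto simp: B'_def)
    ultimately show "\<delta> \<le> \<bar>r + of_int n - of_int j / real P\<bar> \<and> \<bar>r + of_int n - of_int j / real P\<bar> \<le> real L / 2"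
      using far[OF j] by simp
  qed
  also have "1 - psi L P r \<le> 16 / (real P * \<delta>)" by (rule psi_good[OF L3 P0 d0 dP rg'])
  finally show "(\<Sum>z\<in>{1..int N}. \<bar>chi (t - of_int z) - psi L P (t - of_int z)\<bar>) \<le> 32 / (real P * \<delta>)"
    by (simp add: B_def mult.commute)
qed



lemma swap_1_2: "(\<Sum>z\<in>C. \<Sum>j\<in>J. \<Sum>j'\<in>J'. h z j j') = (\<Sum>j\<in>J. \<Sum>j'\<in>J'. \<Sum>z\<in>C. h z j j')"
  by (subst sum.swap) (rule sum.cong[OF refl], rule sum.swap)

lemma swap_3_2: "(\<Sum>x\<in>A. \<Sum>y\<in>B. \<Sum>z\<in>C. \<Sum>j\<in>J. \<Sum>j'\<in>J'. g x y z j j')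
   = (\<Sum>j\<in>J. \<Sum>j'\<in>J'. \<Sum>x\<in>A. \<Sum>y\<in>B. \<Sum>z\<in>C. g x y z j j')"
proof -
  have "(\<Sum>x\<in>A. \<Sum>y\<in>B. \<Sum>z\<in>C. \<Sum>j\<in>J. \<Sum>j'\<in>J'. g x y z j j')
      = (\<Sum>x\<in>A. \<Sum>y\<in>B. \<Sum>j\<in>J. \<Sum>j'\<in>J'. \<Sum>z\<in>C. g x y z j j')"
    by (rule sum.cong[OF refl], rule sum.cong[OF refl], rule swap_1_2)
  also have "\<dots> = (\<Sum>x\<in>A. \<Sum>j\<in>J. \<Sum>j'\<in>J'. \<Sum>y\<in>B. \<Sum>z\<in>C. g x y z j j')"
    by (rule sum.cong[OF refl], rule swap_1_2)
  also have "\<dots> = (\<Sum>j\<in>J. \<Sum>j'\<in>J'. \<Sum>x\<in>A. \<Sum>y\<in>B. \<Sum>z\<in>C. g x y z j j')"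
    by (rule swap_1_2)
  finally show ?thesis .
qed

lemma swap_2_2: "(\<Sum>y\<in>B. \<Sum>z\<in>C. \<Sum>j\<in>J. \<Sum>j'\<in>J'. g y z j j')
   = (\<Sum>j\<in>J. \<Sum>j'\<in>J'. \<Sum>y\<in>B. \<Sum>z\<in>C. g y z j j')"
proof -
  have "(\<Sum>y\<in>B. \<Sum>z\<in>C. \<Sum>j\<in>J. \<Sum>j'\<in>J'. g y z j j')
      = (\<Sum>y\<in>B. \<Sum>j\<in>J. \<Sum>j'\<in>J'. \<Sum>z\<in>C. g y z j j')"
    by (rule sum.cong[OF refl], rule swap_1_2)
  also have "\<dots> = (\<Sum>j\<in>J. \<Sum>j'\<in>J'. \<Sum>y\<in>B. \<Sum>z\<in>C. g y z j j')"
    by (rule swap_1_2)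
  finally show ?thesis .
qed

lemma triple_prod:
  fixes a b c :: "'a \<Rightarrow> complex"
  shows "(\<Sum>x\<in>A. \<Sum>y\<in>B. \<Sum>z\<in>C. a x * b y * c z) = (\<Sum>x\<in>A. a x) * (\<Sum>y\<in>B. b y) * (\<Sum>z\<in>C. c z)"
proof -
  have "(\<Sum>x\<in>A. a x) * (\<Sum>y\<in>B. b y) * (\<Sum>z\<in>C. c z) = (\<Sum>x\<in>A. a x * ((\<Sum>y\<in>B. b y) * (\<Sum>z\<in>C. c z)))"
    by (simp add: sum_distrib_right mult.assoc)
  also have "\<dots> = (\<Sum>x\<in>A. a x * (\<Sum>y\<in>B. \<Sum>z\<in>C. b y * c z))"
    by (simp only: sum_product)
  also have "\<dots> = (\<Sum>x\<in>A. \<Sum>y\<in>B. \<Sum>z\<in>C. a x * b y * c z)"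
    by (simp only: sum_distrib_left mult.assoc)
  finally show ?thesis by simp
qed

definition Fs :: "(int \<Rightarrow> real) \<Rightarrow> nat \<Rightarrow> real \<Rightarrow> complex" where
  "Fs f N \<theta> = (\<Sum>x\<in>{1..int N}. of_real (f x) * e (of_int x * \<theta>))"

definition Sq :: "nat \<Rightarrow> nat \<Rightarrow> nat \<Rightarrow> (int \<Rightarrow> real) \<Rightarrow> real \<Rightarrow> real" where
  "Sq L P N f lm = (\<Sum>y\<in>{1..int N}. \<Sum>y'\<in>{1..int N}. f y * f y' * Phi L P (lm * (of_int y - of_int y')))"

lemma Fs_sq: "complex_of_real ((cmod (Fs f N \<theta>))^2)
   = (\<Sum>y\<in>{1..int N}. \<Sum>y'\<in>{1..int N}. of_real (f y * f y') * e ((of_int y - of_int y') * \<theta>))"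
proof -
  have "complex_of_real ((cmod (Fs f N \<theta>))^2) = Fs f N \<theta> * cnj (Fs f N \<theta>)" by (rule complex_norm_square)
  also have "\<dots> = (\<Sum>y\<in>{1..int N}. of_real (f y) * e (of_int y * \<theta>)) * (\<Sum>y'\<in>{1..int N}. of_real (f y') * e (- (of_int y' * \<theta>)))"
    unfolding Fs_def by (simp add: cnj_e)
  also have "\<dots> = (\<Sum>y\<in>{1..int N}. \<Sum>y'\<in>{1..int N}. (of_real (f y) * e (of_int y * \<theta>)) * (of_real (f y') * e (- (of_int y' * \<theta>))))"
    by (simp add: sum_product)
  also have "\<dots> = (\<Sum>y\<in>{1..int N}. \<Sum>y'\<in>{1..int N}. of_real (f y * f y') * e ((of_int y - of_int y') * \<theta>))"
    by (intro sum.cong refl) (simp add: e_diff cnj_e algebra_simps)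
  finally show ?thesis .
qed

lemma Sq_eq:
  assumes "L > 0" "P > 0"
  shows "Sq L P N f lm = (1 / (real L * real (L*P))) *
     (\<Sum>j<L*P. \<Sum>j'<L*P. (cmod (Fs f N ((real j - real j') * lm / real L)))^2)"
proof -
  let ?K = "L*P" and ?B = "{1..int N}"
  define c where "c = 1 / (real L * real ?K)"
  have "complex_of_real (Sq L P N f lm)
     = (\<Sum>y\<in>?B. \<Sum>y'\<in>?B. of_real (f y * f y') * (of_real c * (\<Sum>j<?K. \<Sum>j'<?K. e ((real j - real j') * (lm * (of_int y - of_int y') / real L)))))"
    unfolding Sq_def of_real_sum c_def by (intro sum.cong refl) (simp add: Phi_expand[OF assms])
  also have "\<dots> = of_real c * (\<Sum>y\<in>?B. \<Sum>y'\<in>?B. \<Sum>j<?K. \<Sum>j'<?K. of_real (f y * f y') * e ((of_int y - of_int y') * ((real j - real j') * lm / real L)))"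
    by (simp add: sum_distrib_left algebra_simps)
  also have "\<dots> = of_real c * (\<Sum>j<?K. \<Sum>j'<?K. \<Sum>y\<in>?B. \<Sum>y'\<in>?B. of_real (f y * f y') * e ((of_int y - of_int y') * ((real j - real j') * lm / real L)))"
    by (subst swap_2_2) (rule refl)
  also have "\<dots> = of_real c * (\<Sum>j<?K. \<Sum>j'<?K. complex_of_real ((cmod (Fs f N ((real j - real j') * lm / real L)))^2))"
    by (simp only: Fs_sq)
  also have "\<dots> = complex_of_real (c * (\<Sum>j<?K. \<Sum>j'<?K. (cmod (Fs f N ((real j - real j') * lm / real L)))^2))"
    by simp
  finally show ?thesis unfolding c_def using of_real_eq_iff by blast
qed

lemma Sq_nonneg: assumes "L > 0" "P > 0" shows "Sq L P N f lm \<ge> 0"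
  unfolding Sq_eq[OF assms] by (intro mult_nonneg_nonneg sum_nonneg) auto

lemma main_term:
  fixes f1 f2 f3 :: "int \<Rightarrow> real" and l1 l2 l3 t U :: real
  assumes "L > 0" "P > 0" and U: "\<And>\<theta>. cmod (Fs f1 N \<theta>) \<le> U"
  shows "\<bar>\<Sum>x\<in>{1..int N}. \<Sum>y\<in>{1..int N}. \<Sum>z\<in>{1..int N}.
            f1 x * f2 y * f3 z * Phi L P (l1 * of_int x + l2 * of_int y + l3 * of_int z - t)\<bar>
         \<le> U / 2 * (Sq L P N f2 l2 + Sq L P N f3 l3)"
proof -
  let ?K = "L*P" and ?B = "{1..int N}"
  define c where "c = 1 / (real L * real ?K)"
  have c0: "c \<ge> 0" by (simp add: c_def)
  define k where "k j j' = (real j - real j') / real L" for j j' :: nat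
  have U0: "U \<ge> 0" using U[of 0] norm_ge_zero order_trans by blast
  have ef: "e ((real j - real j') * ((l1 * of_int x + l2 * of_int y + l3 * of_int z - t) / real L))
     = e (- (k j j' * t)) * (e (of_int x * (k j j' * l1)) * e (of_int y * (k j j' * l2)) * e (of_int z * (k j j' * l3)))"
    for j j' :: nat and x y z :: int
  proof -
    have "(real j - real j') * ((l1 * of_int x + l2 * of_int y + l3 * of_int z - t) / real L)
       = - (k j j' * t) + (of_int x * (k j j' * l1) + of_int y * (k j j' * l2) + of_int z * (k j j' * l3))"
      using assms(1) by (simp add: k_def field_simps)
    note h = this
    show ?thesis by (subst h) (simp only: e_add)
  qed
  have "complex_of_real (\<Sum>x\<in>?B. \<Sum>y\<in>?B. \<Sum>z\<in>?B. f1 x * f2 y * f3 z * Phi L P (l1 * of_int x + l2 * of_int y + l3 * of_int z - t))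
    = (\<Sum>x\<in>?B. \<Sum>y\<in>?B. \<Sum>z\<in>?B. of_real (f1 x * f2 y * f3 z) * (of_real c * (\<Sum>j<?K. \<Sum>j'<?K.
          e ((real j - real j') * ((l1 * of_int x + l2 * of_int y + l3 * of_int z - t) / real L)))))"
    unfolding of_real_sum c_def by (intro sum.cong refl) (simp add: Phi_expand[OF assms(1,2)])
  also have "\<dots> = (\<Sum>x\<in>?B. \<Sum>y\<in>?B. \<Sum>z\<in>?B. of_real (f1 x * f2 y * f3 z) * (of_real c * (\<Sum>j<?K. \<Sum>j'<?K.
          e (- (k j j' * t)) * (e (of_int x * (k j j' * l1)) * e (of_int y * (k j j' * l2)) * e (of_int z * (k j j' * l3))))))"
    by (simp only: ef)
  also have "\<dots> = of_real c * (\<Sum>x\<in>?B. \<Sum>y\<in>?B. \<Sum>z\<in>?B. \<Sum>j<?K. \<Sum>j'<?K. e (- (k j j' * t)) *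
        ((of_real (f1 x) * e (of_int x * (k j j' * l1))) * (of_real (f2 y) * e (of_int y * (k j j' * l2))) * (of_real (f3 z) * e (of_int z * (k j j' * l3)))))"
    by (simp add: sum_distrib_left mult_ac)
  also have "\<dots> = of_real c * (\<Sum>j<?K. \<Sum>j'<?K. \<Sum>x\<in>?B. \<Sum>y\<in>?B. \<Sum>z\<in>?B. e (- (k j j' * t)) *
        ((of_real (f1 x) * e (of_int x * (k j j' * l1))) * (of_real (f2 y) * e (of_int y * (k j j' * l2))) * (of_real (f3 z) * e (of_int z * (k j j' * l3)))))"
    by (subst swap_3_2) (rule refl)
  also have "\<dots> = of_real c * (\<Sum>j<?K. \<Sum>j'<?K. e (- (k j j' * t)) *
        (Fs f1 N (k j j' * l1) * Fs f2 N (k j j' * l2) * Fs f3 N (k j j' * l3)))"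
  proof -
    have tp: "(\<Sum>x\<in>?B. \<Sum>y\<in>?B. \<Sum>z\<in>?B. e (- (k j j' * t)) *
        ((of_real (f1 x) * e (of_int x * (k j j' * l1))) * (of_real (f2 y) * e (of_int y * (k j j' * l2))) * (of_real (f3 z) * e (of_int z * (k j j' * l3)))))
      = e (- (k j j' * t)) * (Fs f1 N (k j j' * l1) * Fs f2 N (k j j' * l2) * Fs f3 N (k j j' * l3))" for j j'
      unfolding Fs_def by (subst triple_prod[symmetric]) (simp only: sum_distrib_left)
    show ?thesis by (simp only: tp)
  qed
  finally have eq: "complex_of_real (\<Sum>x\<in>?B. \<Sum>y\<in>?B. \<Sum>z\<in>?B. f1 x * f2 y * f3 z * Phi L P (l1 * of_int x + l2 * of_int y + l3 * of_int z - t))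
     = of_real c * (\<Sum>j<?K. \<Sum>j'<?K. e (- (k j j' * t)) *
        (Fs f1 N (k j j' * l1) * Fs f2 N (k j j' * l2) * Fs f3 N (k j j' * l3)))" .
  have "\<bar>\<Sum>x\<in>?B. \<Sum>y\<in>?B. \<Sum>z\<in>?B. f1 x * f2 y * f3 z * Phi L P (l1 * of_int x + l2 * of_int y + l3 * of_int z - t)\<bar>
     = cmod (of_real c * (\<Sum>j<?K. \<Sum>j'<?K. e (- (k j j' * t)) *
        (Fs f1 N (k j j' * l1) * Fs f2 N (k j j' * l2) * Fs f3 N (k j j' * l3))))"
  proof -
    have "\<bar>\<Sum>x\<in>?B. \<Sum>y\<in>?B. \<Sum>z\<in>?B. f1 x * f2 y * f3 z * Phi L P (l1 * of_int x + l2 * of_int y + l3 * of_int z - t)\<bar>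
      = cmod (complex_of_real (\<Sum>x\<in>?B. \<Sum>y\<in>?B. \<Sum>z\<in>?B. f1 x * f2 y * f3 z * Phi L P (l1 * of_int x + l2 * of_int y + l3 * of_int z - t)))"
      by (simp only: norm_of_real)
    thus ?thesis by (simp only: eq)
  qed
  also have "\<dots> \<le> c * (\<Sum>j<?K. \<Sum>j'<?K. cmod (e (- (k j j' * t)) *
        (Fs f1 N (k j j' * l1) * Fs f2 N (k j j' * l2) * Fs f3 N (k j j' * l3))))"
  proof -
    let ?X = "\<lambda>j j'. e (- (k j j' * t)) * (Fs f1 N (k j j' * l1) * Fs f2 N (k j j' * l2) * Fs f3 N (k j j' * l3))"
    have n1: "cmod (\<Sum>j<?K. \<Sum>j'<?K. ?X j j') \<le> (\<Sum>j<?K. \<Sum>j'<?K. cmod (?X j j'))"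
      by (rule order_trans[OF norm_sum], intro sum_mono norm_sum)
    have "cmod (of_real c * (\<Sum>j<?K. \<Sum>j'<?K. ?X j j')) = c * cmod (\<Sum>j<?K. \<Sum>j'<?K. ?X j j')"
      using c0 by (simp only: norm_mult norm_of_real abs_of_nonneg)
    also have "\<dots> \<le> c * (\<Sum>j<?K. \<Sum>j'<?K. cmod (?X j j'))" by (rule mult_left_mono[OF n1 c0])
    finally show ?thesis .
  qed
  also have "\<dots> \<le> c * (\<Sum>j<?K. \<Sum>j'<?K. U * ((cmod (Fs f2 N (k j j' * l2)))^2 + (cmod (Fs f3 N (k j j' * l3)))^2) / 2)"
  proof (intro mult_left_mono sum_mono c0)
    fix j j'
    let ?a = "cmod (Fs f2 N (k j j' * l2))" and ?b = "cmod (Fs f3 N (k j j' * l3))"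
    have ab: "?a * ?b \<le> (?a^2 + ?b^2) / 2"
      using sum_squares_bound[of ?a ?b] by (simp add: power2_eq_square field_simps)
    have "cmod (e (- (k j j' * t)) * (Fs f1 N (k j j' * l1) * Fs f2 N (k j j' * l2) * Fs f3 N (k j j' * l3)))
        = cmod (Fs f1 N (k j j' * l1)) * (?a * ?b)" by (simp add: norm_mult)
    also have "\<dots> \<le> U * (?a * ?b)" by (intro mult_right_mono U) auto
    also have "\<dots> \<le> U * ((?a^2 + ?b^2) / 2)" by (intro mult_left_mono ab U0)
    finally show "cmod (e (- (k j j' * t)) * (Fs f1 N (k j j' * l1) * Fs f2 N (k j j' * l2) * Fs f3 N (k j j' * l3)))
        \<le> U * (?a^2 + ?b^2) / 2" by simp
  qed
  also have "\<dots> = U / 2 * (c * (\<Sum>j<?K. \<Sum>j'<?K. (cmod (Fs f2 N (k j j' * l2)))^2)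
       + c * (\<Sum>j<?K. \<Sum>j'<?K. (cmod (Fs f3 N (k j j' * l3)))^2))"
    by (simp add: sum_distrib_left sum.distrib algebra_simps add_divide_distrib)
  also have "\<dots> = U / 2 * (Sq L P N f2 l2 + Sq L P N f3 l3)"
    unfolding Sq_eq[OF assms(1,2)] c_def k_def by (simp add: mult.commute mult.left_commute)
  finally show ?thesis .
qed



definition Cd :: "real \<Rightarrow> nat \<Rightarrow> real" where
  "Cd q P = real P * (2 / \<bar>q\<bar> + 1) + 8 * (1 + \<bar>q\<bar>) / (real P * \<bar>q\<bar>)"

lemma card_near:
  fixes q :: real and y :: int and S :: "int set"
  assumes "q > 0" "S \<subseteq> {y'. \<bar>q * (of_int y - of_int y')\<bar> < 1}"
  shows "real (card S) \<le> 2 / q + 1"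
proof -
  define lo where "lo = \<lceil>of_int y - 1/q\<rceil>"
  define hi where "hi = \<lfloor>of_int y + 1/q\<rfloor>"
  have "S \<subseteq> {lo..hi}"
  proof
    fix y' assume "y' \<in> S"
    hence "\<bar>q * (of_int y - of_int y')\<bar> < 1" using assms by auto
    hence "q * \<bar>of_int y - of_int y'\<bar> < 1" by (simp only: abs_mult abs_of_pos[OF assms(1)])
    hence "\<bar>of_int y - of_int y'\<bar> < 1/q" using assms by (simp add: field_simps)
    hence "of_int y - 1/q \<le> of_int y'" "of_int y' \<le> of_int y + 1/q" by linarith+
    thus "y' \<in> {lo..hi}" unfolding lo_def hi_def by (simp only: atLeastAtMost_iff ceiling_le_iff le_floor_iff)
  qed
  hence "card S \<le> card {lo..hi}" by (intro card_mono) auto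
  also have "card {lo..hi} = nat (hi - lo + 1)" by simp
  finally have c: "real (card S) \<le> real (nat (hi - lo + 1))" by simp
  have "of_int hi \<le> of_int y + 1/q" "of_int y - 1/q \<le> of_int lo" unfolding lo_def hi_def by auto
  hence "real_of_int (hi - lo + 1) \<le> 2/q + 1" by simp
  moreover have "0 \<le> 2/q + 1" using assms by simp
  ultimately have "real (nat (hi - lo + 1)) \<le> 2/q + 1" by (cases "hi - lo + 1 \<ge> 0") auto
  thus ?thesis using c by linarith
qed

lemma row_bound:
  fixes lm :: real and y :: int
  assumes L0: "L > 0" and P0: "P > 0" and lm: "lm \<noteq> 0" and LN: "\<bar>lm\<bar> * real N \<le> real L / 2"
    and y: "y \<in> {1..int N}"
  shows "(\<Sum>y'\<in>{1..int N}. Phi L P (lm * (of_int y - of_int y'))) \<le> Cd lm P"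
proof -
  define q where "q = \<bar>lm\<bar>"
  have q0: "q > 0" using lm by (simp add: q_def)
  define B where "B = {1..int N}"
  define Bn where "Bn = {y'\<in>B. \<bar>lm * (of_int y - of_int y')\<bar> < 1}"
  define Bf where "Bf = {y'\<in>B. \<not> \<bar>lm * (of_int y - of_int y')\<bar> < 1}"
  have "Bn \<subseteq> B" "Bf \<subseteq> B" by (auto simp: Bn_def Bf_def)
  hence fB: "finite Bn" "finite Bf" by (auto simp: B_def intro: finite_subset)
  have "(\<Sum>y'\<in>B. Phi L P (lm * (of_int y - of_int y'))) = (\<Sum>y'\<in>Bn. Phi L P (lm * (of_int y - of_int y'))) + (\<Sum>y'\<in>Bf. Phi L P (lm * (of_int y - of_int y')))"
  proof -
    have "B = Bn \<union> Bf" "Bn \<inter> Bf = {}" by (auto simp: Bn_def Bf_def)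
    thus ?thesis using sum.union_disjoint[OF fB] by simp
  qed
  also have "(\<Sum>y'\<in>Bn. Phi L P (lm * (of_int y - of_int y'))) \<le> (\<Sum>y'\<in>Bn. real P)"
    by (intro sum_mono Phi_le_P L0 P0)
  also have "\<dots> = real (card Bn) * real P" by simp
  also have "\<dots> \<le> (2 / q + 1) * real P"
  proof (intro mult_right_mono)
    show "real (card Bn) \<le> 2 / q + 1"
    proof (rule card_near[OF q0, of _ y])
      show "Bn \<subseteq> {y'. \<bar>q * (of_int y - of_int y')\<bar> < 1}" by (auto simp: Bn_def q_def abs_mult)
    qed
  qed simp
  also have "(\<Sum>y'\<in>Bf. Phi L P (lm * (of_int y - of_int y'))) \<le> (\<Sum>y'\<in>Bf. (4 / real P) * (1 / (q * of_int y - of_int y' * q)^2))"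
  proof (rule sum_mono)
    fix y' assume y': "y' \<in> Bf"
    have big: "1 \<le> \<bar>lm * (of_int y - of_int y')\<bar>" using y' by (auto simp: Bf_def)
    have "\<bar>of_int y - of_int y'\<bar> \<le> real N" using y y' by (auto simp: Bf_def B_def)
    hence "\<bar>lm * (of_int y - of_int y')\<bar> \<le> \<bar>lm\<bar> * real N" by (simp add: abs_mult mult_left_mono)
    hence a1: "\<bar>lm * (of_int y - of_int y')\<bar> \<le> real L / 2" using LN by linarith
    have a2: "0 < \<bar>lm * (of_int y - of_int y')\<bar>" using big by linarith
    have "Phi L P (lm * (of_int y - of_int y')) \<le> 4 / (real P * (lm * (of_int y - of_int y'))^2)"
      by (rule Phi_decay[OF L0 P0 a2 a1])
    moreover have "(lm * (of_int y - of_int y'))^2 = (q * of_int y - of_int y' * q)^2"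
    proof -
      have qq: "q * q = lm * lm" unfolding q_def by (rule abs_mult_self_eq)
      have "(q * of_int y - of_int y' * q)^2 = (q * q) * (of_int y - of_int y')^2" by (simp add: power2_eq_square algebra_simps)
      moreover have "(lm * (of_int y - of_int y'))^2 = (lm * lm) * (of_int y - of_int y')^2" by (simp add: power2_eq_square algebra_simps)
      ultimately show ?thesis using qq by simp
    qed
    ultimately show "Phi L P (lm * (of_int y - of_int y')) \<le> (4 / real P) * (1 / (q * of_int y - of_int y' * q)^2)"
      by simp
  qed
  also have "\<dots> = (4 / real P) * (\<Sum>y'\<in>Bf. 1 / (q * of_int y - of_int y' * q)^2)"
    by (simp add: sum_distrib_left)
  also have "\<dots> \<le> (4 / real P) * (2 * ((1 + q / 1) / (q * 1)))"
  proof (intro mult_left_mono GL[OF fB(2) q0])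
    fix j assume "j \<in> Bf"
    hence "1 \<le> \<bar>lm * (of_int y - of_int j)\<bar>" by (auto simp: Bf_def)
    moreover have "\<bar>lm * (of_int y - of_int j)\<bar> = \<bar>q * of_int y - of_int j * q\<bar>"
    proof -
      have "q * of_int y - of_int j * q = q * (of_int y - of_int j)" by (simp add: algebra_simps)
      thus ?thesis by (simp only: abs_mult q_def abs_abs)
    qed
    ultimately show "1 \<le> \<bar>q * of_int y - of_int j * q\<bar>" by simp
  qed auto
  finally have "(\<Sum>y'\<in>B. Phi L P (lm * (of_int y - of_int y'))) \<le> (2 / q + 1) * real P + (4 / real P) * (2 * ((1 + q / 1) / (q * 1)))"
    by simp
  also have "\<dots> = Cd lm P" unfolding Cd_def q_def using P0 lm by (simp add: field_simps)
  finally show ?thesis by (simp add: B_def)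
qed

lemma Sq_bound:
  fixes lm :: real and f :: "int \<Rightarrow> real"
  assumes L0: "L > 0" and P0: "P > 0" and lm: "lm \<noteq> 0" and LN: "\<bar>lm\<bar> * real N \<le> real L / 2"
    and f: "\<And>y. y \<in> {1..int N} \<Longrightarrow> \<bar>f y\<bar> \<le> 1"
  shows "Sq L P N f lm \<le> real N * Cd lm P"
proof -
  have "Sq L P N f lm \<le> (\<Sum>y\<in>{1..int N}. \<Sum>y'\<in>{1..int N}. Phi L P (lm * (of_int y - of_int y')))"
    unfolding Sq_def
  proof (intro sum_mono)
    fix y y' assume "y \<in> {1..int N}" "y' \<in> {1..int N}"
    hence "\<bar>f y * f y'\<bar> \<le> 1" using f by (simp add: abs_mult mult_le_one)
    hence "f y * f y' \<le> 1" by linarith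
    thus "f y * f y' * Phi L P (lm * (of_int y - of_int y')) \<le> Phi L P (lm * (of_int y - of_int y'))"
      using mult_right_mono[OF _ Phi_nonneg, of "f y * f y'" 1] by simp
  qed
  also have "\<dots> \<le> (\<Sum>y\<in>{1..int N}. Cd lm P)"
    by (intro sum_mono row_bound[OF L0 P0 lm LN])
  also have "\<dots> = real N * Cd lm P" by simp
  finally show ?thesis .
qed



definition bad :: "real \<Rightarrow> real \<Rightarrow> int \<Rightarrow> bool" where
  "bad \<beta> \<delta> d \<longleftrightarrow> \<bar>\<beta> * of_int d - of_int (nint (\<beta> * of_int d))\<bar> > 1/2 - \<delta>"

lemma nint_nearest: "\<bar>t - of_int (nint t)\<bar> \<le> \<bar>t - of_int m\<bar>"
proof (cases "m = nint t")
  case False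
  have b: "-1/2 \<le> t - of_int (nint t)" "t - of_int (nint t) < 1/2" by (rule nint_bounds)+
  have "\<bar>of_int m - of_int (nint t)\<bar> \<ge> (1::real)" using False by (simp flip: of_int_diff)
  thus ?thesis using b by linarith
qed simp

lemma irrat_sep:
  fixes \<beta> :: real and Q :: int
  assumes "\<beta> \<notin> \<rat>"
  shows "\<exists>\<eta>>0. \<forall>j m. 1 \<le> j \<and> j < Q \<longrightarrow> \<eta> \<le> \<bar>of_int j * \<beta> - of_int m\<bar>"
proof -
  define g where "g j = \<bar>of_int j * \<beta> - of_int (nint (of_int j * \<beta>))\<bar>" for j :: int
  define \<eta> where "\<eta> = Min (g ` {1..<Q} \<union> {1})"
  have fin: "finite (g ` {1..<Q} \<union> {1})" by simp
  have gpos: "g j > 0" if "1 \<le> j" for j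
  proof -
    have "of_int j * \<beta> \<noteq> of_int (nint (of_int j * \<beta>))"
    proof
      assume eq: "of_int j * \<beta> = of_int (nint (of_int j * \<beta>))"
      have "j \<noteq> 0" using that by simp
      hence "\<beta> = of_int (nint (of_int j * \<beta>)) / of_int j" using eq by (simp add: field_simps)
      hence "\<beta> \<in> \<rat>" by (metis Rats_divide Rats_of_int)
      thus False using assms by simp
    qed
    thus ?thesis by (simp add: g_def)
  qed
  have "\<eta> > 0" unfolding \<eta>_def using fin gpos by (subst Min_gr_iff) auto
  moreover have "\<eta> \<le> \<bar>of_int j * \<beta> - of_int m\<bar>" if "1 \<le> j" "j < Q" for j m
  proof -
    have "\<eta> \<le> g j" unfolding \<eta>_def using fin that by (intro Min_le) auto
    also have "g j \<le> \<bar>of_int j * \<beta> - of_int m\<bar>" unfolding g_def by (rule nint_nearest)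
    finally show ?thesis .
  qed
  ultimately show ?thesis by blast
qed

lemma bad_pair:
  fixes \<beta> \<delta> :: real
  assumes "bad \<beta> \<delta> d1" "bad \<beta> \<delta> d2"
  shows "\<exists>m::int. \<bar>of_int (d2 - d1) * \<beta> - of_int m\<bar> < 2 * \<delta>"
proof -
  define n1 where "n1 = nint (\<beta> * of_int d1)"
  define n2 where "n2 = nint (\<beta> * of_int d2)"
  define r1 where "r1 = \<beta> * of_int d1 - of_int n1"
  define r2 where "r2 = \<beta> * of_int d2 - of_int n2"
  have b1: "-1/2 \<le> r1" "r1 < 1/2" unfolding r1_def n1_def by (rule nint_bounds)+
  have b2: "-1/2 \<le> r2" "r2 < 1/2" unfolding r2_def n2_def by (rule nint_bounds)+
  have a1: "\<bar>r1\<bar> > 1/2 - \<delta>" using assms(1) by (simp add: bad_def r1_def n1_def)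
  have a2: "\<bar>r2\<bar> > 1/2 - \<delta>" using assms(2) by (simp add: bad_def r2_def n2_def)
  have eq: "of_int (d2 - d1) * \<beta> = of_int (n2 - n1) + (r2 - r1)" by (simp add: r1_def r2_def algebra_simps)
  have "\<bar>r2 - r1\<bar> < 2 * \<delta> \<or> \<bar>r2 - r1 - 1\<bar> < 2 * \<delta> \<or> \<bar>r2 - r1 + 1\<bar> < 2 * \<delta>"
  proof (cases "r1 \<ge> 0")
    case c1: True
    hence x1: "r1 > 1/2 - \<delta>" using a1 by simp
    show ?thesis
    proof (cases "r2 \<ge> 0")
      case True
      hence "r2 > 1/2 - \<delta>" using a2 by simp
      hence "\<bar>r2 - r1\<bar> < 2 * \<delta>" using x1 b1 b2 by (simp only: abs_less_iff) linarith
      thus ?thesis by blast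
    next
      case False
      hence "r2 < -(1/2 - \<delta>)" using a2 by simp
      hence "\<bar>r2 - r1 + 1\<bar> < 2 * \<delta>" using x1 b1 b2 by (simp only: abs_less_iff) linarith
      thus ?thesis by blast
    qed
  next
    case c1: False
    hence x1: "r1 < -(1/2 - \<delta>)" using a1 by simp
    show ?thesis
    proof (cases "r2 \<ge> 0")
      case True
      hence "r2 > 1/2 - \<delta>" using a2 by simp
      hence "\<bar>r2 - r1 - 1\<bar> < 2 * \<delta>" using x1 b1 b2 by (simp only: abs_less_iff) linarith
      thus ?thesis by blast
    next
      case False
      hence "r2 < -(1/2 - \<delta>)" using a2 by simp
      hence "\<bar>r2 - r1\<bar> < 2 * \<delta>" using x1 b1 b2 by (simp only: abs_less_iff) linarith
      thus ?thesis by blast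
    qed
  qed
  moreover {
    assume "\<bar>r2 - r1\<bar> < 2 * \<delta>"
    hence "\<bar>of_int (d2 - d1) * \<beta> - of_int (n2 - n1)\<bar> < 2 * \<delta>" unfolding eq by simp
    hence ?thesis by blast }
  moreover {
    assume "\<bar>r2 - r1 - 1\<bar> < 2 * \<delta>"
    hence "\<bar>of_int (d2 - d1) * \<beta> - of_int (n2 - n1 + 1)\<bar> < 2 * \<delta>" unfolding eq by (simp add: algebra_simps)
    hence ?thesis by blast }
  moreover {
    assume "\<bar>r2 - r1 + 1\<bar> < 2 * \<delta>"
    hence "\<bar>of_int (d2 - d1) * \<beta> - of_int (n2 - n1 - 1)\<bar> < 2 * \<delta>" unfolding eq by (simp add: algebra_simps)
    hence ?thesis by blast }
  ultimately show ?thesis by blast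
qed

lemma card_separated:
  fixes S :: "int set" and Q :: int and N :: nat
  assumes "Q > 0" "S \<subseteq> {- int N..int N}" "\<And>a b. a \<in> S \<Longrightarrow> b \<in> S \<Longrightarrow> a < b \<Longrightarrow> b - a \<ge> Q"
  shows "real (card S) \<le> 2 * real N / of_int Q + 1"
proof -
  define g where "g d = (d + int N) div Q" for d
  have inj: "inj_on g S"
  proof (rule inj_onI, rule ccontr)
    fix a b assume ab: "a \<in> S" "b \<in> S" "g a = g b" "a \<noteq> b"
    have key: "\<bar>b - a\<bar> < Q"
    proof -
      have "a + int N = Q * g a + (a + int N) mod Q" "b + int N = Q * g b + (b + int N) mod Q"
        unfolding g_def by simp_all
      moreover have "0 \<le> (a + int N) mod Q" "(a + int N) mod Q < Q" "0 \<le> (b + int N) mod Q" "(b + int N) mod Q < Q"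
        using assms(1) by simp_all
      moreover have "Q * g a = Q * g b" using ab(3) by simp
      ultimately show ?thesis by linarith
    qed
    show False
    proof (cases "a < b")
      case True thus False using assms(3)[OF ab(1,2) True] key by linarith
    next
      case False hence "b < a" using ab(4) by simp
      thus False using assms(3)[OF ab(2,1)] key by linarith
    qed
  qed
  have img: "g ` S \<subseteq> {0..(2 * int N) div Q}"
  proof
    fix x assume "x \<in> g ` S"
    then obtain d where d: "d \<in> S" "x = g d" by auto
    have "0 \<le> d + int N" "d + int N \<le> 2 * int N" using d assms(2) by auto
    hence "0 \<le> (d + int N) div Q" "(d + int N) div Q \<le> (2 * int N) div Q"
      using assms(1) by (simp_all add: zdiv_mono1 pos_imp_zdiv_nonneg_iff)
    thus "x \<in> {0..(2 * int N) div Q}" using d by (simp add: g_def)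
  qed
  have "card S = card (g ` S)" using card_image[OF inj] by simp
  also have "\<dots> \<le> card {0..(2 * int N) div Q}" by (intro card_mono img) simp
  also have "\<dots> = nat ((2 * int N) div Q + 1)" by simp
  finally have c: "real (card S) \<le> real (nat ((2 * int N) div Q + 1))" by simp
  have "real_of_int ((2 * int N) div Q) \<le> real_of_int (2 * int N) / of_int Q"
    by (rule real_of_int_div4)
  moreover have "(2 * int N) div Q \<ge> 0" using assms(1) by (simp add: pos_imp_zdiv_nonneg_iff)
  moreover have "real_of_int (2 * int N) = 2 * real N" by simp
  ultimately have "real (nat ((2 * int N) div Q + 1)) \<le> 2 * real N / of_int Q + 1" by simp
  thus ?thesis using c by linarith
qed

lemma bad_count:
  fixes \<beta> \<epsilon> :: real
  assumes "\<beta> \<notin> \<rat>" "\<epsilon> > 0"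
  shows "\<exists>\<delta>>0. \<forall>N::nat. real (card {d\<in>{- int N..int N}. bad \<beta> \<delta> d}) \<le> \<epsilon> * real N + 1"
proof -
  define Q :: int where "Q = \<lceil>2 / \<epsilon>\<rceil> + 1"
  have "2 / \<epsilon> > 0" using assms(2) by simp
  hence "\<lceil>2 / \<epsilon>\<rceil> \<ge> 0" by (simp only: zero_le_ceiling)
  hence Q0: "Q > 0" unfolding Q_def by simp
  have Qe: "2 / of_int Q \<le> \<epsilon>"
  proof -
    have "2 / \<epsilon> \<le> of_int Q" unfolding Q_def by linarith
    hence "2 \<le> \<epsilon> * of_int Q" using assms(2) by (simp add: field_simps)
    thus ?thesis using Q0 by (simp add: field_simps)
  qed
  obtain \<eta> where \<eta>: "\<eta> > 0" "\<And>j m. 1 \<le> j \<Longrightarrow> j < Q \<Longrightarrow> \<eta> \<le> \<bar>of_int j * \<beta> - of_int m\<bar>"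
    using irrat_sep[OF assms(1), of Q] by blast
  define \<delta> where "\<delta> = \<eta> / 2"
  have d0: "\<delta> > 0" using \<eta> by (simp add: \<delta>_def)
  have "real (card {d\<in>{- int N..int N}. bad \<beta> \<delta> d}) \<le> \<epsilon> * real N + 1" for N :: nat
  proof -
    have "real (card {d\<in>{- int N..int N}. bad \<beta> \<delta> d}) \<le> 2 * real N / of_int Q + 1"
    proof (rule card_separated[OF Q0])
      fix a b assume ab: "a \<in> {d\<in>{- int N..int N}. bad \<beta> \<delta> d}" "b \<in> {d\<in>{- int N..int N}. bad \<beta> \<delta> d}" "a < b"
      show "b - a \<ge> Q"
      proof (rule ccontr)
        assume "\<not> b - a \<ge> Q"
        hence j: "1 \<le> b - a" "b - a < Q" using ab(3) by auto
        obtain m where "\<bar>of_int (b - a) * \<beta> - of_int m\<bar> < 2 * \<delta>" using bad_pair[of \<beta> \<delta> a b] ab by auto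
        moreover have "\<eta> \<le> \<bar>of_int (b - a) * \<beta> - of_int m\<bar>" by (rule \<eta>(2)[OF j])
        ultimately show False by (simp add: \<delta>_def)
      qed
    qed auto
    also have "2 * real N / of_int Q = real N * (2 / of_int Q)" by simp
    also have "\<dots> \<le> real N * \<epsilon>" by (intro mult_left_mono Qe) simp
    finally show ?thesis by (simp add: mult.commute)
  qed
  thus ?thesis using d0 by blast
qed



definition Tri :: "real \<Rightarrow> nat \<Rightarrow> (int \<Rightarrow> real) \<Rightarrow> (int \<Rightarrow> real) \<Rightarrow> (int \<Rightarrow> real) \<Rightarrow> real" where
  "Tri \<beta> N g1 g2 g3 = (\<Sum>x\<in>{1..int N}. \<Sum>y\<in>{1..int N}. \<Sum>z\<in>{1..int N}.
      g1 x * g2 y * g3 z * chi (of_int x + \<beta> * (of_int y - of_int x) - of_int z))"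

lemma zsum_ind:
  assumes "S \<subseteq> {1..int N}"
  shows "(\<Sum>z\<in>{1..int N}. indicator S z * chi (t - of_int z)) = (indicator S (nint t) :: real)"
proof -
  have "(\<Sum>z\<in>{1..int N}. indicator S z * chi (t - of_int z)) = (\<Sum>z\<in>{1..int N}. if z = nint t then indicator S z else 0)"
    by (intro sum.cong refl) (simp add: chi_nint)
  also have "\<dots> = (if nint t \<in> {1..int N} then indicator S (nint t) else 0)"
    by (simp add: sum.delta')
  also have "\<dots> = indicator S (nint t)" using assms by (auto simp: indicator_def)
  finally show ?thesis .
qed

lemma trip_Tri:
  assumes S: "S \<subseteq> {1..int N}"
  shows "trip S \<beta> = Tri \<beta> N (indicator S) (indicator S) (indicator S)"
proof -
  let ?B = "{1..int N}" and ?D = "{- int N..int N}"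
  define h where "h = (\<lambda>(x, d). (indicator S x * indicator S (x + d) * indicator S (nint (of_int x + \<beta> * of_int d))) :: real)"
  have supp: "h p = 0" if "p \<notin> ?B \<times> ?D" for p
  proof (cases p)
    case (Pair x d)
    show ?thesis
    proof (cases "x \<in> S \<and> x + d \<in> S")
      case True
      hence "x \<in> ?B" "x + d \<in> ?B" using S by auto
      hence "p \<in> ?B \<times> ?D" using Pair by auto
      thus ?thesis using that by simp
    next
      case False thus ?thesis by (auto simp: h_def Pair indicator_def)
    qed
  qed
  have "trip S \<beta> = infsum h UNIV" unfolding trip_def h_def by simp
  also have "\<dots> = infsum h (?B \<times> ?D)"
    by (rule infsum_cong_neutral) (use supp in auto)
  also have "\<dots> = sum h (?B \<times> ?D)" by simp
  also have "\<dots> = (\<Sum>x\<in>?B. \<Sum>d\<in>?D. h (x, d))" by (simp add: sum.cartesian_product)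
  also have "\<dots> = (\<Sum>x\<in>?B. \<Sum>y\<in>?B. indicator S x * indicator S y * (\<Sum>z\<in>?B. indicator S z * chi (of_int x + \<beta> * (of_int y - of_int x) - of_int z)))"
  proof (rule sum.cong[OF refl])
    fix x assume x: "x \<in> ?B"
    have sub: "(\<lambda>y. y - x) ` ?B \<subseteq> ?D" using x by auto
    have "(\<Sum>d\<in>?D. h (x, d)) = (\<Sum>d\<in>(\<lambda>y. y - x) ` ?B. h (x, d))"
    proof (rule sum.mono_neutral_right[OF _ sub])
      show "\<forall>d\<in>?D - (\<lambda>y. y - x) ` ?B. h (x, d) = 0"
      proof
        fix d assume d: "d \<in> ?D - (\<lambda>y. y - x) ` ?B"
        have "x + d \<notin> ?B"
        proof
          assume "x + d \<in> ?B"
          hence "d \<in> (\<lambda>y. y - x) ` ?B" by (intro image_eqI[of _ _ "x + d"]) auto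
          thus False using d by simp
        qed
        hence "x + d \<notin> S" using S by auto
        thus "h (x, d) = 0" by (simp add: h_def)
      qed
    qed simp
    also have "\<dots> = (\<Sum>y\<in>?B. h (x, y - x))" by (subst sum.reindex) (auto simp: inj_on_def)
    also have "\<dots> = (\<Sum>y\<in>?B. indicator S x * indicator S y * (\<Sum>z\<in>?B. indicator S z * chi (of_int x + \<beta> * (of_int y - of_int x) - of_int z)))"
      by (intro sum.cong refl) (simp add: h_def zsum_ind[OF S])
    finally show "(\<Sum>d\<in>?D. h (x, d)) = (\<Sum>y\<in>?B. indicator S x * indicator S y * (\<Sum>z\<in>?B. indicator S z * chi (of_int x + \<beta> * (of_int y - of_int x) - of_int z)))" .
  qed
  also have "\<dots> = Tri \<beta> N (indicator S) (indicator S) (indicator S)"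
    unfolding Tri_def by (simp only: sum_distrib_left mult.assoc)
  finally show ?thesis .
qed

definition Uval :: "(nat \<Rightarrow> int set) \<Rightarrow> nat \<Rightarrow> real" where
  "Uval A N = (SUP \<theta>\<in>{0..1::real}.
         norm ((1 / of_nat N) * (\<Sum>n\<in>{1..int N}. of_real (balanced (A N) N n) * e (of_int n * \<theta>))))"

lemma Fs_Uval:
  assumes "N > 0"
  shows "cmod (Fs (balanced (A N) N) N \<theta>) \<le> real N * Uval A N"
proof -
  let ?f = "balanced (A N) N"
  define th where "th = \<theta> - of_int \<lfloor>\<theta>\<rfloor>"
  have th01: "th \<in> {0..1}" unfolding th_def by (auto simp: floor_le_iff) linarith
  have eq1: "Fs ?f N \<theta> = Fs ?f N th"
    unfolding Fs_def
  proof (intro sum.cong refl)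
    fix n :: int
    have "of_int n * \<theta> = of_int n * th + of_int (n * \<lfloor>\<theta>\<rfloor>)" by (simp add: th_def algebra_simps)
    hence "e (of_int n * \<theta>) = e (of_int n * th) * e (of_int (n * \<lfloor>\<theta>\<rfloor>))" by (simp only: e_add)
    hence "e (of_int n * \<theta>) = e (of_int n * th)" by (simp only: e_int mult_1_right)
    thus "of_real (?f n) * e (of_int n * \<theta>) = of_real (?f n) * e (of_int n * th)" by simp
  qed
  have eq2: "cmod (Fs ?f N th) = real N * norm ((1 / of_nat N) * Fs ?f N th)"
    using assms by (simp add: norm_mult norm_divide)
  have le: "norm ((1 / of_nat N) * Fs ?f N th) \<le> Uval A N"
    unfolding Uval_def Fs_def
  proof (rule cSUP_upper[OF th01])
    show "bdd_above ((\<lambda>\<theta>. norm ((1 / of_nat N) * (\<Sum>n\<in>{1..int N}. of_real (?f n) * e (of_int n * \<theta>)))) ` {0..1})"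
    proof (rule bdd_aboveI2)
      fix \<theta> :: real
      have "norm ((1 / of_nat N) * (\<Sum>n\<in>{1..int N}. of_real (?f n) * e (of_int n * \<theta>)))
          = (1 / real N) * norm (\<Sum>n\<in>{1..int N}. of_real (?f n) * e (of_int n * \<theta>))"
        by (simp add: norm_mult norm_divide)
      also have "\<dots> \<le> (1 / real N) * (\<Sum>n\<in>{1..int N}. norm (of_real (?f n) * e (of_int n * \<theta>)))"
        by (intro mult_left_mono norm_sum) simp
      also have "\<dots> = (1 / real N) * (\<Sum>n\<in>{1..int N}. \<bar>?f n\<bar>)" by (simp add: norm_mult)
      finally show "norm ((1 / of_nat N) * (\<Sum>n\<in>{1..int N}. of_real (?f n) * e (of_int n * \<theta>))) \<le> (1 / real N) * (\<Sum>n\<in>{1..int N}. \<bar>?f n\<bar>)" .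
    qed
  qed
  have "real N * norm ((1 / of_nat N) * Fs ?f N th) \<le> real N * Uval A N" by (intro mult_left_mono le) auto
  thus ?thesis using eq1 eq2 by simp
qed



definition Lv :: "real \<Rightarrow> nat \<Rightarrow> nat" where
  "Lv \<beta> N = 2 * (nat \<lceil>\<bar>\<beta>\<bar>\<rceil> + 3) * N + 8"

lemma Lv_ge: "real (Lv \<beta> N) \<ge> 2 * ((\<bar>\<beta>\<bar> + 3) * real N) + 8" "Lv \<beta> N \<ge> 3"
proof -
  have "\<bar>\<beta>\<bar> \<le> real (nat \<lceil>\<bar>\<beta>\<bar>\<rceil>)" by linarith
  hence h: "(\<bar>\<beta>\<bar> + 3) * real N \<le> (real (nat \<lceil>\<bar>\<beta>\<bar>\<rceil>) + 3) * real N" by (intro mult_right_mono) auto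
  have e: "real (Lv \<beta> N) = 2 * ((real (nat \<lceil>\<bar>\<beta>\<bar>\<rceil>) + 3) * real N) + 8"
    unfolding Lv_def by (simp only: of_nat_add of_nat_mult of_nat_numeral mult.assoc)
  show "real (Lv \<beta> N) \<ge> 2 * ((\<bar>\<beta>\<bar> + 3) * real N) + 8" unfolding e using h by linarith
  show "Lv \<beta> N \<ge> 3" unfolding Lv_def by simp
qed

abbreviation vv :: "real \<Rightarrow> int \<Rightarrow> int \<Rightarrow> int \<Rightarrow> real" where
  "vv \<beta> x y z \<equiv> of_int x + \<beta> * (of_int y - of_int x) - of_int z"

lemma card_bad_shift:
  assumes "x \<in> {1..int N}"
  shows "card {y\<in>{1..int N}. bad \<beta> \<delta> (y - x)} \<le> card {d\<in>{- int N..int N}. bad \<beta> \<delta> d}"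
proof -
  have "card {y\<in>{1..int N}. bad \<beta> \<delta> (y - x)} = card ((\<lambda>y. y - x) ` {y\<in>{1..int N}. bad \<beta> \<delta> (y - x)})"
    by (rule card_image[symmetric]) (auto simp: inj_on_def)
  also have "\<dots> \<le> card {d\<in>{- int N..int N}. bad \<beta> \<delta> d}"
    by (rule card_mono) (use assms in \<open>auto intro: finite_subset[of _ "{- int N..int N}"]\<close>)
  finally show ?thesis .
qed

lemma err_bound:
  fixes g1 g2 g3 :: "int \<Rightarrow> real" and \<beta> \<delta> :: real
  assumes P0: "P > 0" and d0: "\<delta> > 0" and dP: "1 / real P \<le> \<delta>"
    and g: "\<And>y. y \<in> {1..int N} \<Longrightarrow> \<bar>g1 y\<bar> \<le> 1 \<and> \<bar>g2 y\<bar> \<le> 1 \<and> \<bar>g3 y\<bar> \<le> 1"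
  shows "\<bar>\<Sum>x\<in>{1..int N}. \<Sum>y\<in>{1..int N}. \<Sum>z\<in>{1..int N}.
           g1 x * g2 y * g3 z * (chi (vv \<beta> x y z) - psi (Lv \<beta> N) P (vv \<beta> x y z))\<bar>
         \<le> (real N)^2 * (32 / (real P * \<delta>)) + 20 * real N * real (card {d\<in>{- int N..int N}. bad \<beta> \<delta> d})"
proof -
  let ?B = "{1..int N}" and ?L = "Lv \<beta> N"
  define cb where "cb = real (card {d\<in>{- int N..int N}. bad \<beta> \<delta> d})"
  define bi where "bi x y = (if bad \<beta> \<delta> (y - x) then 1 else 0 :: real)" for x y :: int
  have L3: "?L \<ge> 3" by (rule Lv_ge(2))
  have row: "(\<Sum>z\<in>?B. \<bar>chi (vv \<beta> x y z) - psi ?L P (vv \<beta> x y z)\<bar>) \<le> 32 / (real P * \<delta>) + 20 * bi x y"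
    if x: "x \<in> ?B" and y: "y \<in> ?B" for x y
  proof -
    define t where "t = of_int x + \<beta> * (of_int y - of_int x)"
    have nt: "nint t = x + nint (\<beta> * of_int (y - x))" unfolding t_def by (simp add: nint_add_int[symmetric])
    have rt: "t - of_int (nint t) = \<beta> * of_int (y - x) - of_int (nint (\<beta> * of_int (y - x)))"
      unfolding nt by (simp add: t_def)
    have LB: "\<bar>of_int (nint t)\<bar> + real N + 1 \<le> real ?L / 2"
    proof -
      have b: "-1/2 \<le> t - of_int (nint t)" "t - of_int (nint t) < 1/2" by (rule nint_bounds)+
      have xb: "\<bar>of_int x\<bar> \<le> real N" "\<bar>of_int y - of_int x\<bar> \<le> real N" using x y by auto
      have "\<bar>\<beta> * (of_int y - of_int x)\<bar> \<le> \<bar>\<beta>\<bar> * real N" using xb by (simp add: abs_mult mult_left_mono)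
      hence "\<bar>t\<bar> \<le> real N + \<bar>\<beta>\<bar> * real N" unfolding t_def using xb by linarith
      hence "\<bar>of_int (nint t)\<bar> \<le> real N + \<bar>\<beta>\<bar> * real N + 1/2" using b by linarith
      moreover have "real N + \<bar>\<beta>\<bar> * real N + 1/2 + real N + 1 \<le> (\<bar>\<beta>\<bar> + 3) * real N + 4"
        by (simp add: algebra_simps)
      ultimately show ?thesis using Lv_ge(1)[of \<beta> N] by linarith
    qed
    have eqz: "(\<Sum>z\<in>?B. \<bar>chi (vv \<beta> x y z) - psi ?L P (vv \<beta> x y z)\<bar>) = (\<Sum>z\<in>?B. \<bar>chi (t - of_int z) - psi ?L P (t - of_int z)\<bar>)"
      by (simp add: t_def)
    show ?thesis
    proof (cases "bad \<beta> \<delta> (y - x)")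
      case True
      have "(\<Sum>z\<in>?B. \<bar>chi (t - of_int z) - psi ?L P (t - of_int z)\<bar>) \<le> 20" by (rule Zsum(1)[OF L3 P0 LB])
      moreover have "32 / (real P * \<delta>) \<ge> 0" using P0 d0 by simp
      moreover have "bi x y = 1" using True by (simp add: bi_def)
      ultimately show ?thesis using eqz by linarith
    next
      case False
      hence "\<bar>t - of_int (nint t)\<bar> \<le> 1/2 - \<delta>" unfolding rt bad_def by (simp add: mult.commute)
      hence "(\<Sum>z\<in>?B. \<bar>chi (t - of_int z) - psi ?L P (t - of_int z)\<bar>) \<le> 32 / (real P * \<delta>)"
        by (rule Zsum(2)[OF L3 P0 LB d0 dP])
      thus ?thesis using eqz False by (simp add: bi_def)
    qed
  qed
  have "\<bar>\<Sum>x\<in>?B. \<Sum>y\<in>?B. \<Sum>z\<in>?B. g1 x * g2 y * g3 z * (chi (vv \<beta> x y z) - psi ?L P (vv \<beta> x y z))\<bar>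
      \<le> (\<Sum>x\<in>?B. \<Sum>y\<in>?B. \<Sum>z\<in>?B. \<bar>chi (vv \<beta> x y z) - psi ?L P (vv \<beta> x y z)\<bar>)"
  proof -
    have "\<bar>\<Sum>x\<in>?B. \<Sum>y\<in>?B. \<Sum>z\<in>?B. g1 x * g2 y * g3 z * (chi (vv \<beta> x y z) - psi ?L P (vv \<beta> x y z))\<bar>
        \<le> (\<Sum>x\<in>?B. \<Sum>y\<in>?B. \<Sum>z\<in>?B. \<bar>g1 x * g2 y * g3 z * (chi (vv \<beta> x y z) - psi ?L P (vv \<beta> x y z))\<bar>)"
      by (rule order_trans[OF sum_abs], rule sum_mono, rule order_trans[OF sum_abs], rule sum_mono, rule sum_abs)
    also have "\<dots> \<le> (\<Sum>x\<in>?B. \<Sum>y\<in>?B. \<Sum>z\<in>?B. \<bar>chi (vv \<beta> x y z) - psi ?L P (vv \<beta> x y z)\<bar>)"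
    proof (intro sum_mono)
      fix x y z assume "x \<in> ?B" "y \<in> ?B" "z \<in> ?B"
      hence "\<bar>g1 x * g2 y * g3 z\<bar> \<le> 1" using g by (simp add: abs_mult mult_le_one)
      thus "\<bar>g1 x * g2 y * g3 z * (chi (vv \<beta> x y z) - psi ?L P (vv \<beta> x y z))\<bar> \<le> \<bar>chi (vv \<beta> x y z) - psi ?L P (vv \<beta> x y z)\<bar>"
        unfolding abs_mult[of "g1 x * g2 y * g3 z"] by (intro mult_left_le_one_le) auto
    qed
    finally show ?thesis .
  qed
  also have "\<dots> \<le> (\<Sum>x\<in>?B. \<Sum>y\<in>?B. 32 / (real P * \<delta>) + 20 * bi x y)"
    by (intro sum_mono row)
  also have "\<dots> = (real N)^2 * (32 / (real P * \<delta>)) + 20 * (\<Sum>x\<in>?B. \<Sum>y\<in>?B. bi x y)"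
    by (simp add: sum.distrib sum_distrib_left power2_eq_square)
  also have "(\<Sum>x\<in>?B. \<Sum>y\<in>?B. bi x y) \<le> (\<Sum>x\<in>?B. cb)"
  proof (rule sum_mono)
    fix x assume x: "x \<in> ?B"
    have "(\<Sum>y\<in>?B. bi x y) = real (card {y\<in>?B. bad \<beta> \<delta> (y - x)})"
      unfolding bi_def by (simp add: sum.If_cases Int_def conj_commute)
    also have "\<dots> \<le> cb" unfolding cb_def using card_bad_shift[OF x] by simp
    finally show "(\<Sum>y\<in>?B. bi x y) \<le> cb" .
  qed
  also have "(\<Sum>x\<in>?B. cb) = real N * cb" by simp
  finally show ?thesis by (simp add: cb_def)
qed



lemma psi_main:
  fixes f1 f2 f3 :: "int \<Rightarrow> real" and l1 l2 l3 U C :: real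
  assumes L0: "L > 0" and P0: "P > 0" and U: "\<And>\<theta>. cmod (Fs f1 N \<theta>) \<le> U"
    and S2: "Sq L P N f2 l2 \<le> real N * C" and S3: "Sq L P N f3 l3 \<le> real N * C"
  shows "\<bar>\<Sum>x\<in>{1..int N}. \<Sum>y\<in>{1..int N}. \<Sum>z\<in>{1..int N}.
            f1 x * f2 y * f3 z * psi L P (l1 * of_int x + l2 * of_int y + l3 * of_int z)\<bar>
         \<le> 3 * U * real N * C"
proof -
  let ?B = "{1..int N}"
  have U0: "U \<ge> 0" using U[of 0] norm_ge_zero order_trans by blast
  have NC: "real N * C \<ge> 0" using Sq_nonneg[OF L0 P0, of N f2 l2] S2 by linarith
  define M where "M j = (\<Sum>x\<in>?B. \<Sum>y\<in>?B. \<Sum>z\<in>?B. f1 x * f2 y * f3 z * Phi L P (l1 * of_int x + l2 * of_int y + l3 * of_int z - of_int j / real P))" for j :: int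
  have "(\<Sum>x\<in>?B. \<Sum>y\<in>?B. \<Sum>z\<in>?B. f1 x * f2 y * f3 z * psi L P (l1 * of_int x + l2 * of_int y + l3 * of_int z))
      = (1 / real P) * (\<Sum>j\<in>TT P. M j)"
  proof -
    have "(\<Sum>x\<in>?B. \<Sum>y\<in>?B. \<Sum>z\<in>?B. f1 x * f2 y * f3 z * psi L P (l1 * of_int x + l2 * of_int y + l3 * of_int z))
       = (\<Sum>x\<in>?B. \<Sum>y\<in>?B. \<Sum>z\<in>?B. \<Sum>j\<in>TT P. (1 / real P) * (f1 x * f2 y * f3 z * Phi L P (l1 * of_int x + l2 * of_int y + l3 * of_int z - of_int j / real P)))"
      unfolding psi_def by (simp add: sum_distrib_left mult_ac)
    also have "\<dots> = (\<Sum>j\<in>TT P. \<Sum>x\<in>?B. \<Sum>y\<in>?B. \<Sum>z\<in>?B. (1 / real P) * (f1 x * f2 y * f3 z * Phi L P (l1 * of_int x + l2 * of_int y + l3 * of_int z - of_int j / real P)))"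
    proof -
      have "(\<Sum>x\<in>?B. \<Sum>y\<in>?B. \<Sum>z\<in>?B. \<Sum>j\<in>TT P. (1 / real P) * (f1 x * f2 y * f3 z * Phi L P (l1 * of_int x + l2 * of_int y + l3 * of_int z - of_int j / real P)))
        = (\<Sum>x\<in>?B. \<Sum>y\<in>?B. \<Sum>j\<in>TT P. \<Sum>z\<in>?B. (1 / real P) * (f1 x * f2 y * f3 z * Phi L P (l1 * of_int x + l2 * of_int y + l3 * of_int z - of_int j / real P)))"
        by (rule sum.cong[OF refl], rule sum.cong[OF refl], rule sum.swap)
      also have "\<dots> = (\<Sum>x\<in>?B. \<Sum>j\<in>TT P. \<Sum>y\<in>?B. \<Sum>z\<in>?B. (1 / real P) * (f1 x * f2 y * f3 z * Phi L P (l1 * of_int x + l2 * of_int y + l3 * of_int z - of_int j / real P)))"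
        by (rule sum.cong[OF refl], rule sum.swap)
      also have "\<dots> = (\<Sum>j\<in>TT P. \<Sum>x\<in>?B. \<Sum>y\<in>?B. \<Sum>z\<in>?B. (1 / real P) * (f1 x * f2 y * f3 z * Phi L P (l1 * of_int x + l2 * of_int y + l3 * of_int z - of_int j / real P)))"
        by (rule sum.swap)
      finally show ?thesis .
    qed
    also have "\<dots> = (1 / real P) * (\<Sum>j\<in>TT P. M j)"
      unfolding M_def by (simp only: sum_distrib_left)
    finally show ?thesis .
  qed
  also have "\<bar>(1 / real P) * (\<Sum>j\<in>TT P. M j)\<bar> \<le> (1 / real P) * (\<Sum>j\<in>TT P. U * (real N * C))"
  proof -
    have "\<bar>\<Sum>j\<in>TT P. M j\<bar> \<le> (\<Sum>j\<in>TT P. \<bar>M j\<bar>)" by (rule sum_abs)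
    also have "\<dots> \<le> (\<Sum>j\<in>TT P. U * (real N * C))"
    proof (rule sum_mono)
      fix j
      have "\<bar>M j\<bar> \<le> U / 2 * (Sq L P N f2 l2 + Sq L P N f3 l3)"
        unfolding M_def by (rule main_term[OF L0 P0 U])
      also have "\<dots> \<le> U / 2 * (real N * C + real N * C)"
      proof -
        have "Sq L P N f2 l2 + Sq L P N f3 l3 \<le> real N * C + real N * C" using S2 S3 by linarith
        thus ?thesis using U0 by (intro mult_left_mono) auto
      qed
      finally show "\<bar>M j\<bar> \<le> U * (real N * C)" by (simp add: mult.commute)
    qed
    finally have h: "\<bar>\<Sum>j\<in>TT P. M j\<bar> \<le> (\<Sum>j\<in>TT P. U * (real N * C))" .
    have "\<bar>(1 / real P) * (\<Sum>j\<in>TT P. M j)\<bar> = (1 / real P) * \<bar>\<Sum>j\<in>TT P. M j\<bar>" using P0 by (simp add: abs_mult)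
    also have "\<dots> \<le> (1 / real P) * (\<Sum>j\<in>TT P. U * (real N * C))" using h by (intro mult_left_mono) auto
    finally show ?thesis .
  qed
  also have "\<dots> = (real (card (TT P)) / real P) * (U * (real N * C))" by simp
  also have "\<dots> \<le> 3 * (U * (real N * C))"
  proof (rule mult_right_mono)
    have "real (card (TT P)) \<le> 3 * real P" using card_TT[of P] P0 by linarith
    thus "real (card (TT P)) / real P \<le> 3" using P0 by (simp add: divide_le_eq)
  qed (use U0 NC in simp)
  finally show ?thesis by (simp add: mult_ac)
qed

definition Cm :: "real \<Rightarrow> nat \<Rightarrow> real" where
  "Cm \<beta> P = Cd (1 - \<beta>) P + Cd \<beta> P + Cd (-1) P"

lemma Cd_nonneg: "P > 0 \<Longrightarrow> Cd q P \<ge> 0"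
  unfolding Cd_def by (intro add_nonneg_nonneg mult_nonneg_nonneg divide_nonneg_nonneg) auto

lemma Sq_Cm:
  fixes \<beta> :: real and f :: "int \<Rightarrow> real"
  assumes P0: "P > 0" and irr: "\<beta> \<notin> \<rat>" and f: "\<And>y. y \<in> {1..int N} \<Longrightarrow> \<bar>f y\<bar> \<le> 1"
  shows "Sq (Lv \<beta> N) P N f (1 - \<beta>) \<le> real N * Cm \<beta> P"
    "Sq (Lv \<beta> N) P N f \<beta> \<le> real N * Cm \<beta> P"
    "Sq (Lv \<beta> N) P N f (-1) \<le> real N * Cm \<beta> P"
proof -
  have L0: "Lv \<beta> N > 0" using Lv_ge(2)[of \<beta> N] by simp
  have b0: "\<beta> \<noteq> 0" "1 - \<beta> \<noteq> 0" using irr by auto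
  have LL: "real N \<le> real (Lv \<beta> N) / 2" "\<bar>\<beta>\<bar> * real N \<le> real (Lv \<beta> N) / 2" "\<bar>1 - \<beta>\<bar> * real N \<le> real (Lv \<beta> N) / 2"
  proof -
    have g: "2 * ((\<bar>\<beta>\<bar> + 3) * real N) + 8 \<le> real (Lv \<beta> N)" by (rule Lv_ge(1))
    have "\<bar>1 - \<beta>\<bar> \<le> \<bar>\<beta>\<bar> + 3" by linarith
    hence a: "\<bar>1 - \<beta>\<bar> * real N \<le> (\<bar>\<beta>\<bar> + 3) * real N" by (intro mult_right_mono) auto
    have b: "\<bar>\<beta>\<bar> * real N \<le> (\<bar>\<beta>\<bar> + 3) * real N" by (intro mult_right_mono) auto
    have c: "real N \<le> (\<bar>\<beta>\<bar> + 3) * real N" by (rule mult_left_le_imp_le[of 1]) (auto simp: algebra_simps)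
    show "real N \<le> real (Lv \<beta> N) / 2" "\<bar>\<beta>\<bar> * real N \<le> real (Lv \<beta> N) / 2" "\<bar>1 - \<beta>\<bar> * real N \<le> real (Lv \<beta> N) / 2"
      using a b c g by linarith+
  qed
  have C: "Cd (1 - \<beta>) P \<le> Cm \<beta> P" "Cd \<beta> P \<le> Cm \<beta> P" "Cd (-1) P \<le> Cm \<beta> P"
    unfolding Cm_def using Cd_nonneg[OF P0] by (smt (verit))+
  show "Sq (Lv \<beta> N) P N f (1 - \<beta>) \<le> real N * Cm \<beta> P"
    using Sq_bound[where f=f and lm="1-\<beta>" and L="Lv \<beta> N" and P=P and N=N, OF L0 P0 b0(2) LL(3) f] mult_left_mono[OF C(1), of "real N"] by simp
  show "Sq (Lv \<beta> N) P N f \<beta> \<le> real N * Cm \<beta> P"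
    using Sq_bound[where f=f and lm="\<beta>" and L="Lv \<beta> N" and P=P and N=N, OF L0 P0 b0(1) LL(2) f] mult_left_mono[OF C(2), of "real N"] by simp
  show "Sq (Lv \<beta> N) P N f (-1) \<le> real N * Cm \<beta> P"
    using Sq_bound[where f=f and lm="-1" and L="Lv \<beta> N" and P=P and N=N, OF L0 P0 _ _ f] LL(1) mult_left_mono[OF C(3), of "real N"] by simp
qed



lemma Tri_split:
  "Tri \<beta> N g1 g2 g3 = (\<Sum>x\<in>{1..int N}. \<Sum>y\<in>{1..int N}. \<Sum>z\<in>{1..int N}. g1 x * g2 y * g3 z * psi L P (vv \<beta> x y z))
     + (\<Sum>x\<in>{1..int N}. \<Sum>y\<in>{1..int N}. \<Sum>z\<in>{1..int N}. g1 x * g2 y * g3 z * (chi (vv \<beta> x y z) - psi L P (vv \<beta> x y z)))"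
  unfolding Tri_def by (simp only: sum.distrib[symmetric]) (intro sum.cong refl, simp add: algebra_simps)

lemma Tri_bounds:
  fixes f g h :: "int \<Rightarrow> real" and \<beta> \<delta> U :: real
  assumes P0: "P > 0" and d0: "\<delta> > 0" and dP: "1 / real P \<le> \<delta>" and irr: "\<beta> \<notin> \<rat>"
    and fb: "\<And>y. y \<in> {1..int N} \<Longrightarrow> \<bar>f y\<bar> \<le> 1"
    and gb: "\<And>y. y \<in> {1..int N} \<Longrightarrow> \<bar>g y\<bar> \<le> 1"
    and hb: "\<And>y. y \<in> {1..int N} \<Longrightarrow> \<bar>h y\<bar> \<le> 1"
    and U: "\<And>\<theta>. cmod (Fs f N \<theta>) \<le> U"
  shows "\<bar>Tri \<beta> N f g h\<bar> \<le> (real N)^2 * (32 / (real P * \<delta>)) + 20 * real N * real (card {d\<in>{- int N..int N}. bad \<beta> \<delta> d}) + 3 * U * real N * Cm \<beta> P"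
    "\<bar>Tri \<beta> N g f h\<bar> \<le> (real N)^2 * (32 / (real P * \<delta>)) + 20 * real N * real (card {d\<in>{- int N..int N}. bad \<beta> \<delta> d}) + 3 * U * real N * Cm \<beta> P"
    "\<bar>Tri \<beta> N g h f\<bar> \<le> (real N)^2 * (32 / (real P * \<delta>)) + 20 * real N * real (card {d\<in>{- int N..int N}. bad \<beta> \<delta> d}) + 3 * U * real N * Cm \<beta> P"
proof -
  let ?L = "Lv \<beta> N" and ?B = "{1..int N}"
  let ?E = "(real N)^2 * (32 / (real P * \<delta>)) + 20 * real N * real (card {d\<in>{- int N..int N}. bad \<beta> \<delta> d})"
  have L0: "?L > 0" using Lv_ge(2)[of \<beta> N] by simp
  have vv_eq: "vv \<beta> x y z = (1 - \<beta>) * of_int x + \<beta> * of_int y + (-1) * of_int z" for x y z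
    by (simp add: algebra_simps)
  have gen: "\<bar>Tri \<beta> N g1 g2 g3\<bar> \<le> ?E + 3 * U * real N * Cm \<beta> P"
    if b: "\<And>y. y \<in> ?B \<Longrightarrow> \<bar>g1 y\<bar> \<le> 1 \<and> \<bar>g2 y\<bar> \<le> 1 \<and> \<bar>g3 y\<bar> \<le> 1"
      and main: "\<bar>\<Sum>x\<in>?B. \<Sum>y\<in>?B. \<Sum>z\<in>?B. g1 x * g2 y * g3 z * psi ?L P (vv \<beta> x y z)\<bar> \<le> 3 * U * real N * Cm \<beta> P"
    for g1 g2 g3 :: "int \<Rightarrow> real"
  proof -
    have e: "\<bar>\<Sum>x\<in>?B. \<Sum>y\<in>?B. \<Sum>z\<in>?B. g1 x * g2 y * g3 z * (chi (vv \<beta> x y z) - psi ?L P (vv \<beta> x y z))\<bar> \<le> ?E"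
      by (rule err_bound[OF P0 d0 dP b])
    show ?thesis unfolding Tri_split[where L="?L" and P=P] using e main by linarith
  qed
  show "\<bar>Tri \<beta> N f g h\<bar> \<le> ?E + 3 * U * real N * Cm \<beta> P"
  proof (rule gen)
    show "\<And>y. y \<in> ?B \<Longrightarrow> \<bar>f y\<bar> \<le> 1 \<and> \<bar>g y\<bar> \<le> 1 \<and> \<bar>h y\<bar> \<le> 1" using fb gb hb by blast
    have "(\<Sum>x\<in>?B. \<Sum>y\<in>?B. \<Sum>z\<in>?B. f x * g y * h z * psi ?L P (vv \<beta> x y z))
       = (\<Sum>x\<in>?B. \<Sum>y\<in>?B. \<Sum>z\<in>?B. f x * g y * h z * psi ?L P ((1 - \<beta>) * of_int x + \<beta> * of_int y + (-1) * of_int z))"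
      by (simp only: vv_eq)
    also have "\<bar>\<dots>\<bar> \<le> 3 * U * real N * Cm \<beta> P"
      by (rule psi_main[OF L0 P0 U Sq_Cm(2)[OF P0 irr gb] Sq_Cm(3)[OF P0 irr hb]])
    finally show "\<bar>\<Sum>x\<in>?B. \<Sum>y\<in>?B. \<Sum>z\<in>?B. f x * g y * h z * psi ?L P (vv \<beta> x y z)\<bar> \<le> 3 * U * real N * Cm \<beta> P" .
  qed
  show "\<bar>Tri \<beta> N g f h\<bar> \<le> ?E + 3 * U * real N * Cm \<beta> P"
  proof (rule gen)
    show "\<And>y. y \<in> ?B \<Longrightarrow> \<bar>g y\<bar> \<le> 1 \<and> \<bar>f y\<bar> \<le> 1 \<and> \<bar>h y\<bar> \<le> 1" using fb gb hb by blast
    have "(\<Sum>x\<in>?B. \<Sum>y\<in>?B. \<Sum>z\<in>?B. g x * f y * h z * psi ?L P (vv \<beta> x y z))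
       = (\<Sum>y\<in>?B. \<Sum>x\<in>?B. \<Sum>z\<in>?B. g x * f y * h z * psi ?L P (vv \<beta> x y z))"
      by (rule sum.swap)
    also have "\<dots> = (\<Sum>y\<in>?B. \<Sum>x\<in>?B. \<Sum>z\<in>?B. f y * g x * h z * psi ?L P (\<beta> * of_int y + (1 - \<beta>) * of_int x + (-1) * of_int z))"
      by (intro sum.cong refl) (simp add: algebra_simps)
    also have "\<bar>\<dots>\<bar> \<le> 3 * U * real N * Cm \<beta> P"
      by (rule psi_main[OF L0 P0 U Sq_Cm(1)[OF P0 irr gb] Sq_Cm(3)[OF P0 irr hb]])
    finally show "\<bar>\<Sum>x\<in>?B. \<Sum>y\<in>?B. \<Sum>z\<in>?B. g x * f y * h z * psi ?L P (vv \<beta> x y z)\<bar> \<le> 3 * U * real N * Cm \<beta> P" .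
  qed
  show "\<bar>Tri \<beta> N g h f\<bar> \<le> ?E + 3 * U * real N * Cm \<beta> P"
  proof (rule gen)
    show "\<And>y. y \<in> ?B \<Longrightarrow> \<bar>g y\<bar> \<le> 1 \<and> \<bar>h y\<bar> \<le> 1 \<and> \<bar>f y\<bar> \<le> 1" using fb gb hb by blast
    have "(\<Sum>x\<in>?B. \<Sum>y\<in>?B. \<Sum>z\<in>?B. g x * h y * f z * psi ?L P (vv \<beta> x y z))
       = (\<Sum>x\<in>?B. \<Sum>z\<in>?B. \<Sum>y\<in>?B. g x * h y * f z * psi ?L P (vv \<beta> x y z))"
      by (rule sum.cong[OF refl], rule sum.swap)
    also have "\<dots> = (\<Sum>z\<in>?B. \<Sum>x\<in>?B. \<Sum>y\<in>?B. g x * h y * f z * psi ?L P (vv \<beta> x y z))"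
      by (rule sum.swap)
    also have "\<dots> = (\<Sum>z\<in>?B. \<Sum>x\<in>?B. \<Sum>y\<in>?B. f z * g x * h y * psi ?L P ((-1) * of_int z + (1 - \<beta>) * of_int x + \<beta> * of_int y))"
      by (intro sum.cong refl) (simp add: algebra_simps)
    also have "\<bar>\<dots>\<bar> \<le> 3 * U * real N * Cm \<beta> P"
      by (rule psi_main[OF L0 P0 U Sq_Cm(1)[OF P0 irr gb] Sq_Cm(2)[OF P0 irr hb]])
    finally show "\<bar>\<Sum>x\<in>?B. \<Sum>y\<in>?B. \<Sum>z\<in>?B. g x * h y * f z * psi ?L P (vv \<beta> x y z)\<bar> \<le> 3 * U * real N * Cm \<beta> P" .
  qed
qed



lemma Tri_identity:
  fixes a u :: "int \<Rightarrow> real" and \<alpha> :: real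
  shows "Tri \<beta> N (\<lambda>n. a n - \<alpha> * u n) a a + \<alpha> * Tri \<beta> N u (\<lambda>n. a n - \<alpha> * u n) a
     + \<alpha>^2 * Tri \<beta> N u u (\<lambda>n. a n - \<alpha> * u n) = Tri \<beta> N a a a - \<alpha>^3 * Tri \<beta> N u u u"
  unfolding Tri_def
  by (simp only: sum_distrib_left sum.distrib[symmetric] sum_subtractf[symmetric])
     (intro sum.cong refl, simp add: algebra_simps power2_eq_square power3_eq_cube)

lemma abs3:
  fixes X Y Z \<alpha> :: real
  assumes "\<alpha> \<ge> 0"
  shows "\<bar>X + \<alpha> * Y + \<alpha>^2 * Z\<bar> \<le> \<bar>X\<bar> + \<alpha> * \<bar>Y\<bar> + \<alpha>^2 * \<bar>Z\<bar>"
proof -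
  have "\<bar>X + \<alpha> * Y + \<alpha>^2 * Z\<bar> \<le> \<bar>X + \<alpha> * Y\<bar> + \<bar>\<alpha>^2 * Z\<bar>" by (rule abs_triangle_ineq)
  also have "\<bar>X + \<alpha> * Y\<bar> \<le> \<bar>X\<bar> + \<bar>\<alpha> * Y\<bar>" by (rule abs_triangle_ineq)
  finally show ?thesis using assms by (simp add: abs_mult)
qed

lemma final_alg:
  fixes c b u m :: real and N :: nat
  assumes "N > 0"
  shows "3 * ((real N)^2 * c + 20 * real N * b + 3 * (real N * u) * real N * m) / (real N)^2
     = 3 * (c + 20 * b / real N + 3 * u * m)"
  using assms by (simp add: field_simps power2_eq_square)

lemma N_bound:
  fixes A :: "nat \<Rightarrow> int set" and \<beta> \<delta> :: real
  assumes irr: "\<beta> \<notin> \<rat>" and AN: "A N \<subseteq> {1..int N}" and N0: "N > 0"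
    and P0: "P > 0" and d0: "\<delta> > 0" and dP: "1 / real P \<le> \<delta>"
  shows "\<bar>trip (A N) \<beta> / (real N)^2 - (dens (A N) N)^3 * trip {1..int N} \<beta> / (real N)^2\<bar>
     \<le> 3 * (32 / (real P * \<delta>) + 20 * real (card {d\<in>{- int N..int N}. bad \<beta> \<delta> d}) / real N + 3 * Uval A N * Cm \<beta> P)"
proof -
  let ?B = "{1..int N}"
  define \<alpha> where "\<alpha> = dens (A N) N"
  define a where "a = (indicator (A N) :: int \<Rightarrow> real)"
  define u where "u = (indicator ?B :: int \<Rightarrow> real)"
  define f where "f = balanced (A N) N"
  have fdef: "f = (\<lambda>n. a n - \<alpha> * u n)" unfolding f_def a_def u_def \<alpha>_def balanced_def by auto
  have a0: "0 \<le> \<alpha>" by (simp add: \<alpha>_def dens_def)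
  have a1: "\<alpha> \<le> 1"
  proof -
    have "card (A N) \<le> card ?B" by (intro card_mono AN) simp
    hence "real (card (A N)) \<le> real N" by simp
    thus ?thesis using N0 by (simp add: \<alpha>_def dens_def divide_le_eq)
  qed
  have ab: "\<bar>a y\<bar> \<le> 1" for y by (simp add: a_def indicator_def)
  have ub: "\<bar>u y\<bar> \<le> 1" for y by (simp add: u_def indicator_def)
  have fb: "\<bar>f y\<bar> \<le> 1" for y
  proof -
    have "a y \<in> {0,1}" "u y \<in> {0,1}" by (auto simp: a_def u_def indicator_def)
    thus ?thesis unfolding fdef using a0 a1 by auto
  qed
  define U where "U = real N * Uval A N"
  have U: "cmod (Fs f N \<theta>) \<le> U" for \<theta> unfolding f_def U_def by (rule Fs_Uval[OF N0])
  define Bd where "Bd = (real N)^2 * (32 / (real P * \<delta>)) + 20 * real N * real (card {d\<in>{- int N..int N}. bad \<beta> \<delta> d}) + 3 * U * real N * Cm \<beta> P"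
  have fbB: "\<And>y. y \<in> ?B \<Longrightarrow> \<bar>f y\<bar> \<le> 1" using fb by simp
  have abB: "\<And>y. y \<in> ?B \<Longrightarrow> \<bar>a y\<bar> \<le> 1" using ab by simp
  have ubB: "\<And>y. y \<in> ?B \<Longrightarrow> \<bar>u y\<bar> \<le> 1" using ub by simp
  have UU: "\<And>\<theta>. cmod (Fs f N \<theta>) \<le> U" by (rule U)
  have t1: "\<bar>Tri \<beta> N f a a\<bar> \<le> Bd" unfolding Bd_def by (rule Tri_bounds(1)[OF P0 d0 dP irr fbB abB abB UU])
  have t2: "\<bar>Tri \<beta> N u f a\<bar> \<le> Bd" unfolding Bd_def by (rule Tri_bounds(2)[OF P0 d0 dP irr fbB ubB abB UU])
  have t3: "\<bar>Tri \<beta> N u u f\<bar> \<le> Bd" unfolding Bd_def by (rule Tri_bounds(3)[OF P0 d0 dP irr fbB ubB ubB UU])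
  have trA: "trip (A N) \<beta> = Tri \<beta> N a a a" unfolding a_def by (rule trip_Tri[OF AN])
  have trB: "trip ?B \<beta> = Tri \<beta> N u u u" unfolding u_def by (rule trip_Tri) simp
  have "trip (A N) \<beta> - \<alpha>^3 * trip ?B \<beta> = Tri \<beta> N f a a + \<alpha> * Tri \<beta> N u f a + \<alpha>^2 * Tri \<beta> N u u f"
    unfolding trA trB fdef by (rule Tri_identity[symmetric])
  hence "\<bar>trip (A N) \<beta> - \<alpha>^3 * trip ?B \<beta>\<bar> \<le> \<bar>Tri \<beta> N f a a\<bar> + \<alpha> * \<bar>Tri \<beta> N u f a\<bar> + \<alpha>^2 * \<bar>Tri \<beta> N u u f\<bar>"
    using abs3[where X="Tri \<beta> N f a a" and Y="Tri \<beta> N u f a" and Z="Tri \<beta> N u u f" and \<alpha>=\<alpha>, OF a0] by simp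
  also have "\<dots> \<le> Bd + 1 * Bd + 1 * Bd"
  proof -
    have "\<alpha> * \<bar>Tri \<beta> N u f a\<bar> \<le> 1 * Bd" using t2 a0 a1 by (intro mult_mono) auto
    moreover have "\<alpha>^2 \<le> 1" using a0 a1 by (simp add: power_le_one)
    hence "\<alpha>^2 * \<bar>Tri \<beta> N u u f\<bar> \<le> 1 * Bd" using t3 a0 by (intro mult_mono) auto
    ultimately show ?thesis using t1 by linarith
  qed
  finally have main: "\<bar>trip (A N) \<beta> - \<alpha>^3 * trip ?B \<beta>\<bar> \<le> 3 * Bd" by simp
  have "\<bar>trip (A N) \<beta> / (real N)^2 - \<alpha>^3 * trip ?B \<beta> / (real N)^2\<bar> = \<bar>trip (A N) \<beta> - \<alpha>^3 * trip ?B \<beta>\<bar> / (real N)^2"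
    by (simp add: diff_divide_distrib[symmetric])
  also have "\<dots> \<le> 3 * Bd / (real N)^2" using main by (intro divide_right_mono) auto
  also have "3 * Bd / (real N)^2 = 3 * (32 / (real P * \<delta>) + 20 * real (card {d\<in>{- int N..int N}. bad \<beta> \<delta> d}) / real N + 3 * Uval A N * Cm \<beta> P)"
    unfolding Bd_def U_def using N0 by (rule final_alg)
  finally show ?thesis by (simp add: \<alpha>_def)
qed

theorem corollary1p4:
  fixes A :: "nat \<Rightarrow> int set" and \<beta> :: real
  assumes "\<beta> \<notin> \<rat>"
    and "\<And>N. A N \<subseteq> {1..int N}"
    and "fourier_uniform A"
  shows "(\<lambda>N. trip (A N) \<beta> / (real N)^2
              - (dens (A N) N)^3 * trip {1..int N} \<beta> / (real N)^2) \<longlonglongrightarrow> 0"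
proof (rule LIMSEQ_I)
  fix \<epsilon> :: real assume e0: "\<epsilon> > 0"
  have Ulim: "(\<lambda>N. Uval A N) \<longlonglongrightarrow> 0" using assms(3) unfolding fourier_uniform_def Uval_def .
  obtain \<delta> where d0: "\<delta> > 0" and bc: "\<And>N::nat. real (card {d\<in>{- int N..int N}. bad \<beta> \<delta> d}) \<le> \<epsilon> / 300 * real N + 1"
    using bad_count[OF assms(1), of "\<epsilon> / 300"] e0 by auto
  define P where "P = nat \<lceil>1 / \<delta>\<rceil> + nat \<lceil>480 / (\<delta> * \<epsilon>)\<rceil> + 1"
  have P0: "P > 0" by (simp add: P_def)
  have Pge1: "real P \<ge> 1 / \<delta>" unfolding P_def by linarith
  have Pge2: "real P \<ge> 480 / (\<delta> * \<epsilon>)" unfolding P_def by linarith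
  have dP: "1 / real P \<le> \<delta>"
  proof -
    have "1 \<le> real P * \<delta>" using Pge1 d0 by (simp add: divide_le_eq)
    thus ?thesis using P0 by (simp add: divide_le_eq mult.commute)
  qed
  have T1: "96 / (real P * \<delta>) \<le> \<epsilon> / 5"
  proof -
    have "480 / (\<delta> * \<epsilon>) * \<delta> \<le> real P * \<delta>" using Pge2 d0 by (intro mult_right_mono) auto
    hence "480 / \<epsilon> \<le> real P * \<delta>" using d0 by simp
    hence "480 \<le> real P * \<delta> * \<epsilon>" using e0 by (simp add: divide_le_eq)
    thus ?thesis using d0 P0 e0 by (simp add: divide_le_eq field_simps)
  qed
  define C where "C = Cm \<beta> P"
  have C0: "C \<ge> 0" unfolding C_def Cm_def using Cd_nonneg[OF P0] by (smt (verit))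
  obtain N1 where N1: "\<And>N. N \<ge> N1 \<Longrightarrow> norm (Uval A N - 0) < \<epsilon> / (45 * (C + 1))"
    using LIMSEQ_D[OF Ulim, of "\<epsilon> / (45 * (C + 1))"] e0 C0 by auto
  define N0 where "N0 = max (max N1 1) (nat \<lceil>300 / \<epsilon>\<rceil> + 1)"
  show "\<exists>no. \<forall>N\<ge>no. norm (trip (A N) \<beta> / (real N)^2 - (dens (A N) N)^3 * trip {1..int N} \<beta> / (real N)^2 - 0) < \<epsilon>"
  proof (intro exI allI impI)
    fix N assume N: "N \<ge> N0"
    have Npos: "N > 0" using N by (simp add: N0_def)
    have NN1: "N \<ge> N1" using N by (simp add: N0_def)
    have Nbig: "real N \<ge> 300 / \<epsilon>" using N unfolding N0_def by linarith
    have b: "\<bar>trip (A N) \<beta> / (real N)^2 - (dens (A N) N)^3 * trip {1..int N} \<beta> / (real N)^2\<bar>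
      \<le> 3 * (32 / (real P * \<delta>) + 20 * real (card {d\<in>{- int N..int N}. bad \<beta> \<delta> d}) / real N + 3 * Uval A N * Cm \<beta> P)"
      by (rule N_bound[where A=A and N=N and P=P and \<delta>=\<delta> and \<beta>=\<beta>, OF assms(1) assms(2)[of N] Npos P0 d0 dP])
    have t2: "60 * real (card {d\<in>{- int N..int N}. bad \<beta> \<delta> d}) / real N \<le> \<epsilon> / 5 + \<epsilon> / 5"
    proof -
      have "60 * real (card {d\<in>{- int N..int N}. bad \<beta> \<delta> d}) \<le> 60 * (\<epsilon> / 300 * real N + 1)"
        using bc[of N] by simp
      hence "60 * real (card {d\<in>{- int N..int N}. bad \<beta> \<delta> d}) / real N \<le> 60 * (\<epsilon> / 300 * real N + 1) / real N"
        using Npos by (intro divide_right_mono) auto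
      also have "\<dots> = \<epsilon> / 5 + 60 / real N" using Npos by (simp add: field_simps)
      also have "60 / real N \<le> \<epsilon> / 5"
      proof -
        have "300 \<le> real N * \<epsilon>" using Nbig e0 by (simp add: divide_le_eq mult.commute)
        thus ?thesis using Npos e0 by (simp add: divide_le_eq field_simps)
      qed
      finally show ?thesis by simp
    qed
    have t3: "9 * Uval A N * C \<le> \<epsilon> / 5"
    proof -
      have "Uval A N < \<epsilon> / (45 * (C + 1))" using N1[OF NN1] by simp
      hence "Uval A N * C \<le> \<epsilon> / (45 * (C + 1)) * C" using C0 by (intro mult_right_mono) auto
      also have "\<dots> \<le> \<epsilon> / 45"
      proof -
        have "C \<le> C + 1" by simp
        hence "\<epsilon> * C \<le> \<epsilon> * (C + 1)" using e0 by (intro mult_left_mono) auto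
        thus ?thesis using C0 e0 by (simp add: field_simps)
      qed
      finally show ?thesis by simp
    qed
    have "3 * (32 / (real P * \<delta>) + 20 * real (card {d\<in>{- int N..int N}. bad \<beta> \<delta> d}) / real N + 3 * Uval A N * Cm \<beta> P)
        = 96 / (real P * \<delta>) + 60 * real (card {d\<in>{- int N..int N}. bad \<beta> \<delta> d}) / real N + 9 * Uval A N * C"
      by (simp add: C_def algebra_simps)
    also have "\<dots> \<le> \<epsilon> / 5 + (\<epsilon> / 5 + \<epsilon> / 5) + \<epsilon> / 5" using T1 t2 t3 by linarith
    also have "\<dots> < \<epsilon>" using e0 by simp
    finally show "norm (trip (A N) \<beta> / (real N)^2 - (dens (A N) N)^3 * trip {1..int N} \<beta> / (real N)^2 - 0) < \<epsilon>"
      using b by simp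
  qed
qed


end
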